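(* Let $\{X_n,n\geq1\}$ be a $\varphi$-mixing sequence of random variables with common marginal distribution function $F$, whose mixing coefficients satisfy $\varphi(n)=O(n^{-3})$. Fix $p\in(0,1)$ and let $\xi_p=F^{-1}(p)=\inf\{x:F(x)\geq p\}$. Assume that $F$ possesses a positive continuous density $f$ in a neighborhood $\mathscr{N}_p$ of $\xi_p$ such that $0<d=\sup\{f(x):x\in\mathscr{N}_p\}<\infty$. Let $C_0>0$ be a constant, let $a_n\sim C_0 n^{-1/2}(\log n)^{3/4}$ (i.e. $a_n/(C_0n^{-1/2}(\log n)^{3/4})\to1$), let $\mathscr{D}_n=[\xi_p-a_n,\xi_p+a_n]$ and $$H_{p,n}=\sup_{x\in\mathscr{D}_n}\big|(F_n(x)-F(x))-(F_n(\xi_p)-p)\big|.$$ Then with probability 1, $$H_{p,n}\leq (d+4C_3)\,n^{-3/4}\log n\quad\text{for all } n \text{ sufficiently large},$$ where $C_3=4\big[1+4\sum_{n=1}^\infty\varphi^{1/2}(n)\big]$.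
   Context: All random variables are defined on a probability space $(\Omega,\mathcal{F},P)$. $F_n(x)=\frac1n\sum_{i=1}^n I(X_i\leq x)$ is the empirical distribution function of $X_1,\dots,X_n$. For $n\leq m$ let $\mathcal{F}_n^m=\sigma(X_i,n\leq i\leq m)$. For sub-$\sigma$-algebras $\mathcal{B},\mathcal{R}$ let $\varphi(\mathcal{B},\mathcal{R})=\sup_{A\in\mathcal{B},B\in\mathcal{R},P(A)>0}|P(B\mid A)-P(B)|$, and the mixing coefficients are $\varphi(n)=\sup_{k\geq1}\varphi(\mathcal{F}_1^k,\mathcal{F}_{k+n}^\infty)$. The sequence is called $\varphi$-mixing if $\varphi(n)\downarrow0$ as $n\to\infty$. *)

theory Defs
  imports "HOL-Probability.Probability" "HOL-Library.Landau_Symbols"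
begin

definition gen_sigma :: "'a measure \<Rightarrow> (nat \<Rightarrow> 'a \<Rightarrow> real) \<Rightarrow> nat set \<Rightarrow> 'a set set" where
  "gen_sigma M X I = sigma_sets (space M)
     (\<Union>i\<in>I. {X i -` B \<inter> space M | B. B \<in> sets borel})"

definition phi_sig :: "'a measure \<Rightarrow> 'a set set \<Rightarrow> 'a set set \<Rightarrow> real" where
  "phi_sig M \<A> \<B> = Sup {\<bar>measure M (A \<inter> B) / measure M A - measure M B\<bar> | A B.
      A \<in> \<A> \<and> B \<in> \<B> \<and> measure M A > 0}"

definition phi_mix :: "'a measure \<Rightarrow> (nat \<Rightarrow> 'a \<Rightarrow> real) \<Rightarrow> nat \<Rightarrow> real" where
  "phi_mix M X n = (SUP k\<in>{1..}. phi_sig M (gen_sigma M X {1..k}) (gen_sigma M X {k+n..}))"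

definition emp_df :: "(nat \<Rightarrow> 'a \<Rightarrow> real) \<Rightarrow> nat \<Rightarrow> 'a \<Rightarrow> real \<Rightarrow> real" where
  "emp_df X n \<omega> x = (1 / real n) * (\<Sum>i=1..n. if X i \<omega> \<le> x then 1 else 0)"

end

theory Submission
  imports Defs "HOL-Real_Asymp.Real_Asymp"
begin
lemma layer_cake_w:
  fixes M :: "'a measure" and w :: "'a \<Rightarrow> ennreal"
  assumes sf: "sigma_finite_measure M" and [measurable]: "f \<in> borel_measurable M" "w \<in> borel_measurable M"
    and nn: "\<And>x. x\<in>space M \<Longrightarrow> 0 \<le> f x"
  shows "(\<integral>\<^sup>+x. w x * ennreal (f x) \<partial>M) =
    (\<integral>\<^sup>+t. indicator {0..} t * (\<integral>\<^sup>+x. w x * indicator {x\<in>space M. t < f x} x \<partial>M) \<partial>lborel)"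
proof -
  interpret pair_sigma_finite M lborel
    by (simp add: pair_sigma_finite.intro sf lborel.sigma_finite_measure_axioms)
  have "(\<integral>\<^sup>+x. w x * ennreal (f x) \<partial>M) = (\<integral>\<^sup>+x. (\<integral>\<^sup>+t. w x * indicator {0..<f x} t \<partial>lborel) \<partial>M)"
  proof (rule nn_integral_cong)
    fix x assume "x \<in> space M"
    then show "w x * ennreal (f x) = (\<integral>\<^sup>+t. w x * indicator {0..<f x} t \<partial>lborel)"
      using nn[of x] by (simp add: nn_integral_cmult)
  qed
  also have "\<dots> = (\<integral>\<^sup>+t. (\<integral>\<^sup>+x. w x * indicator {0..<f x} t \<partial>M) \<partial>lborel)"
    by (rule Fubini'[symmetric]) (simp only: indicator_def atLeastLessThan_iff split_beta, measurable)
  also have "\<dots> = (\<integral>\<^sup>+t. indicator {0..} t * (\<integral>\<^sup>+x. w x * indicator {x\<in>space M. t < f x} x \<partial>M) \<partial>lborel)"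
  proof (rule nn_integral_cong)
    fix t :: real
    have "(\<integral>\<^sup>+x. w x * indicator {0..<f x} t \<partial>M) = (\<integral>\<^sup>+x. indicator {0..} t * (w x * indicator {x\<in>space M. t < f x} x) \<partial>M)"
      by (rule nn_integral_cong) (auto simp: indicator_def)
    also have "\<dots> = indicator {0..} t * (\<integral>\<^sup>+x. w x * indicator {x\<in>space M. t < f x} x \<partial>M)"
      by (rule nn_integral_cmult) measurable
    finally show "(\<integral>\<^sup>+x. w x * indicator {0..<f x} t \<partial>M) = indicator {0..} t * (\<integral>\<^sup>+x. w x * indicator {x\<in>space M. t < f x} x \<partial>M)" .
  qed
  finally show ?thesis .
qed

definition Msub :: "'a measure \<Rightarrow> (nat \<Rightarrow> 'a \<Rightarrow> real) \<Rightarrow> nat set \<Rightarrow> 'a measure" where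
  "Msub M X I = sigma (space M) (\<Union>i\<in>I. {X i -` B \<inter> space M | B. B \<in> sets borel})"

lemma exp_quad: fixes y :: real assumes "\<bar>y\<bar> \<le> 1" shows "exp y \<le> 1 + y + y^2"
proof (cases "0 \<le> y")
  case True then show ?thesis using assms exp_bound by auto
next
  case False
  define x where "x = -y"
  have x: "0 \<le> x" "x \<le> 1" using False assms x_def by auto
  have e: "1 + x + x^2/2 \<le> exp x" using exp_lower_Taylor_quadratic x(1) by blast
  have p: "1 \<le> (1 - x + x^2) * (1 + x + x^2/2)"
  proof -
    have "(1 - x + x^2) * (1 + x + x^2/2) = 1 + x^2/2 + x^3/2 + x^4/2" by (simp add: field_simps eval_nat_numeral)
    moreover have "0 \<le> x^2/2 + x^3/2 + x^4/2" using x by simp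
    ultimately show ?thesis by simp
  qed
  have q: "0 < 1 - x + x^2"
  proof -
    have "x^2 \<ge> 0" by simp
    then show ?thesis using x by (cases "x = 1") (simp, linarith)
  qed
  have "1 \<le> (1 - x + x^2) * exp x" using p e q by (meson mult_left_mono order.trans less_imp_le)
  then have "exp (-x) \<le> 1 - x + x^2" using q by (simp add: exp_minus field_simps)
  then show ?thesis using x_def by simp
qed

locale mixseq = prob_space M for M :: "'a measure" +
  fixes X :: "nat \<Rightarrow> 'a \<Rightarrow> real"
  assumes rv: "\<And>i. 1 \<le> i \<Longrightarrow> X i \<in> borel_measurable M"
begin

lemma gens_sub: assumes "I \<subseteq> {1..}" shows "(\<Union>i\<in>I. {X i -` B \<inter> space M | B. B \<in> sets borel}) \<subseteq> sets M"
proof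
  fix x assume "x \<in> (\<Union>i\<in>I. {X i -` B \<inter> space M | B. B \<in> sets borel})"
  then obtain i B where "i \<in> I" "B \<in> sets borel" "x = X i -` B \<inter> space M" by blast
  moreover have "1 \<le> i" using assms \<open>i \<in> I\<close> by auto
  ultimately show "x \<in> sets M" using measurable_sets[OF rv] by blast
qed

lemma gens_pow: "(\<Union>i\<in>I. {X i -` B \<inter> space M | B. B \<in> sets borel}) \<subseteq> Pow (space M)"
  by auto

lemma gen_sigma_sub: "gen_sigma M X I \<subseteq> sets M" if "I \<subseteq> {1..}"
  unfolding gen_sigma_def using sigma_sets_le_sets_iff[of M] gens_sub[OF that] by simp

lemma sets_Msub: "sets (Msub M X I) = gen_sigma M X I"
  unfolding Msub_def gen_sigma_def using gens_pow by (rule sets_measure_of)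

lemma space_Msub[simp]: "space (Msub M X I) = space M"
  unfolding Msub_def using gens_pow by (rule space_measure_of)

lemma X_Msub: "i \<in> I \<Longrightarrow> X i \<in> borel_measurable (Msub M X I)"
proof (rule measurableI)
  fix A :: "real set" assume "i \<in> I" "A \<in> sets borel"
  then have "X i -` A \<inter> space M \<in> (\<Union>i\<in>I. {X i -` B \<inter> space M | B. B \<in> sets borel})" by blast
  then show "X i -` A \<inter> space (Msub M X I) \<in> sets (Msub M X I)"
    unfolding sets_Msub gen_sigma_def by auto
qed auto

lemma Msub_M: fixes f :: "'a \<Rightarrow> real" assumes "I \<subseteq> {1..}" "f \<in> borel_measurable (Msub M X I)" shows "f \<in> borel_measurable M"
proof (rule measurableI)
  fix A :: "real set" assume "A \<in> sets borel"
  then have "f -` A \<inter> space (Msub M X I) \<in> sets (Msub M X I)" using measurable_sets[OF assms(2)] by blast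
  then show "f -` A \<inter> space M \<in> sets M" using gen_sigma_sub[OF assms(1)] sets_Msub by auto
qed auto

lemma space_gen: "space M \<in> gen_sigma M X I"
  unfolding gen_sigma_def by (rule sigma_sets_top)

lemma elem_le1: assumes "A \<in> sets M" "B \<in> sets M"
  shows "\<bar>measure M (A \<inter> B) / measure M A - measure M B\<bar> \<le> 1"
proof (cases "measure M A = 0")
  case True then show ?thesis by simp
next
  case False
  have "measure M (A \<inter> B) \<le> measure M A" using assms by (intro finite_measure_mono) auto
  then have a: "measure M (A \<inter> B) / measure M A \<le> 1" "0 \<le> measure M (A \<inter> B) / measure M A"
  proof -
    have pos: "0 < measure M A" using False measure_nonneg[of M A] by linarith
    show "measure M (A \<inter> B) / measure M A \<le> 1" using pos \<open>measure M (A \<inter> B) \<le> measure M A\<close> by simp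
    show "0 \<le> measure M (A \<inter> B) / measure M A" using pos by simp
  qed
  have "measure M B \<le> 1" "0 \<le> measure M B" by simp_all
  then show ?thesis unfolding abs_le_iff using a by linarith
qed

lemma phi_sig_props:
  assumes "I \<subseteq> {1..}" "J \<subseteq> {1..}"
  shows "0 \<le> phi_sig M (gen_sigma M X I) (gen_sigma M X J)"
    and "phi_sig M (gen_sigma M X I) (gen_sigma M X J) \<le> 1"
    and "\<And>A B. A \<in> gen_sigma M X I \<Longrightarrow> B \<in> gen_sigma M X J \<Longrightarrow> measure M A > 0 \<Longrightarrow>
        \<bar>measure M (A \<inter> B) / measure M A - measure M B\<bar> \<le> phi_sig M (gen_sigma M X I) (gen_sigma M X J)"
proof -
  let ?S = "{\<bar>measure M (A \<inter> B) / measure M A - measure M B\<bar> | A B.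
      A \<in> gen_sigma M X I \<and> B \<in> gen_sigma M X J \<and> measure M A > 0}"
  have ne: "?S \<noteq> {}" using space_gen[of I] space_gen[of J] prob_space by force
  have ub: "\<forall>x\<in>?S. x \<le> 1" using gen_sigma_sub[OF assms(1)] gen_sigma_sub[OF assms(2)] elem_le1 by blast
  then have bdd: "bdd_above ?S" by (intro bdd_aboveI[where M=1]) auto
  show "phi_sig M (gen_sigma M X I) (gen_sigma M X J) \<le> 1"
    unfolding phi_sig_def using ne ub by (intro cSup_least) auto
  obtain x where "x \<in> ?S" using ne by blast
  then show "0 \<le> phi_sig M (gen_sigma M X I) (gen_sigma M X J)"
    unfolding phi_sig_def using bdd by (smt (verit, best) cSup_upper mem_Collect_eq)
  show "\<And>A B. A \<in> gen_sigma M X I \<Longrightarrow> B \<in> gen_sigma M X J \<Longrightarrow> measure M A > 0 \<Longrightarrow>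
        \<bar>measure M (A \<inter> B) / measure M A - measure M B\<bar> \<le> phi_sig M (gen_sigma M X I) (gen_sigma M X J)"
    unfolding phi_sig_def using bdd by (intro cSup_upper) auto
qed

lemma phi_mix_props:
  shows "0 \<le> phi_mix M X n" "phi_mix M X n \<le> 1"
    and "\<And>k. 1 \<le> k \<Longrightarrow> phi_sig M (gen_sigma M X {1..k}) (gen_sigma M X {k+n..}) \<le> phi_mix M X n"
proof -
  have s: "{1..k} \<subseteq> {1::nat..}" "{k+n..} \<subseteq> {1::nat..}" if "1 \<le> k" for k using that by auto
  have bdd: "bdd_above ((\<lambda>k. phi_sig M (gen_sigma M X {1..k}) (gen_sigma M X {k+n..})) ` {1..})"
    using phi_sig_props(2)[OF s] by (intro bdd_aboveI2[where M=1]) auto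
  show "\<And>k. 1 \<le> k \<Longrightarrow> phi_sig M (gen_sigma M X {1..k}) (gen_sigma M X {k+n..}) \<le> phi_mix M X n"
    unfolding phi_mix_def using bdd by (intro cSUP_upper) auto
  show "phi_mix M X n \<le> 1"
    unfolding phi_mix_def using phi_sig_props(2)[OF s] by (intro cSUP_least) auto
  show "0 \<le> phi_mix M X n"
  proof -
    have "0 \<le> phi_sig M (gen_sigma M X {1..1}) (gen_sigma M X {1+n..})"
      using s[of 1] by (intro phi_sig_props(1)) auto
    then show ?thesis unfolding phi_mix_def using bdd
    by (intro cSUP_upper2[where x=1]) auto
  qed
qed

lemma mix_set:
  assumes "1 \<le> k" "A \<in> gen_sigma M X {1..k}" "B \<in> gen_sigma M X {k+n..}"
  shows "\<bar>measure M (A \<inter> B) - measure M A * measure M B\<bar> \<le> phi_mix M X n * measure M A"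
proof (cases "measure M A = 0")
  case True
  have "A \<in> sets M" "B \<in> sets M" using assms gen_sigma_sub[of "{1..k}"] gen_sigma_sub[of "{k+n..}"] by auto
  then have "measure M (A \<inter> B) \<le> measure M A" by (intro finite_measure_mono) auto
  then show ?thesis using True by simp
next
  case False
  then have pos: "measure M A > 0" by (simp add: zero_less_measure_iff)
  have s: "{1..k} \<subseteq> {1::nat..}" "{k+n..} \<subseteq> {1::nat..}" using assms by auto
  have "\<bar>measure M (A \<inter> B) / measure M A - measure M B\<bar> \<le> phi_mix M X n"
    using phi_sig_props(3)[OF s assms(2,3) pos] phi_mix_props(3)[OF assms(1), where n=n] by linarith
  then have "\<bar>measure M (A \<inter> B) / measure M A - measure M B\<bar> * measure M A \<le> phi_mix M X n * measure M A"
    using pos by (intro mult_right_mono) auto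
  moreover have "\<bar>measure M (A \<inter> B) / measure M A - measure M B\<bar> * measure M A = \<bar>measure M (A \<inter> B) - measure M A * measure M B\<bar>"
    using pos by (simp add: abs_mult[symmetric] field_simps)
  ultimately show ?thesis by simp
qed


lemma sfM: "sigma_finite_measure M"
  by (simp add: sigma_finite_measure_axioms)

lemma mix_ind:
  fixes g :: "'a \<Rightarrow> real"
  assumes k: "1 \<le> k" and A: "A \<in> gen_sigma M X {1..k}"
    and g: "g \<in> borel_measurable (Msub M X {k+n..})" "\<And>\<omega>. \<omega>\<in>space M \<Longrightarrow> 0 \<le> g \<omega>" "\<And>\<omega>. \<omega>\<in>space M \<Longrightarrow> g \<omega> \<le> K"
  shows "(\<integral>\<^sup>+x. indicator A x * ennreal (g x) \<partial>M) \<le> ennreal (measure M A) * (\<integral>\<^sup>+x. ennreal (g x) \<partial>M) + ennreal (measure M A * phi_mix M X n * K)"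
proof -
  have s1: "{1..k} \<subseteq> {1::nat..}" "{k+n..} \<subseteq> {1::nat..}" using k by auto
  have gM[measurable]: "g \<in> borel_measurable M" using Msub_M[OF s1(2) g(1)] .
  have AM[measurable]: "A \<in> sets M" using gen_sigma_sub[OF s1(1)] A by auto
  have K0: "0 \<le> K" using g(2,3)[of "SOME x. x \<in> space M"] not_empty some_in_eq by (metis order.trans)
  have Bgen: "{x\<in>space M. t < g x} \<in> gen_sigma M X {k+n..}" for t
  proof -
    have "{x\<in>space M. t < g x} = g -` {t<..} \<inter> space (Msub M X {k+n..})" by auto
    also have "\<dots> \<in> sets (Msub M X {k+n..})" using measurable_sets[OF g(1)] by simp
    finally show ?thesis using sets_Msub by simp
  qed
  have "(\<integral>\<^sup>+x. indicator A x * ennreal (g x) \<partial>M) =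
    (\<integral>\<^sup>+t. indicator {0..} t * (\<integral>\<^sup>+x. indicator A x * indicator {x\<in>space M. t < g x} x \<partial>M) \<partial>lborel)"
    by (rule layer_cake_w[OF sfM]) (use g(2) in auto)
  also have "\<dots> = (\<integral>\<^sup>+t. indicator {0..} t * emeasure M (A \<inter> {x\<in>space M. t < g x}) \<partial>lborel)"
    by (intro nn_integral_cong) (simp add: indicator_inter_arith[symmetric])
  also have "\<dots> \<le> (\<integral>\<^sup>+t. ennreal (measure M A) * (indicator {0..} t * emeasure M {x\<in>space M. t < g x})
      + ennreal (measure M A * phi_mix M X n) * indicator {0..<K} t \<partial>lborel)"
  proof (rule nn_integral_mono)
    fix t :: real
    show "indicator {0..} t * emeasure M (A \<inter> {x\<in>space M. t < g x}) \<le>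
      ennreal (measure M A) * (indicator {0..} t * emeasure M {x\<in>space M. t < g x})
      + ennreal (measure M A * phi_mix M X n) * indicator {0..<K} t"
    proof (cases "0 \<le> t")
      case False then show ?thesis by simp
    next
      case True
      show ?thesis
      proof (cases "t < K")
        case False
        then have "A \<inter> {x\<in>space M. t < g x} = {}" using g(3) by force
        then show ?thesis by simp
      next
        case tK: True
        have "measure M (A \<inter> {x\<in>space M. t < g x}) \<le> measure M A * measure M {x\<in>space M. t < g x} + phi_mix M X n * measure M A"
          using mix_set[OF k A Bgen[of t]] by linarith
        then have "emeasure M (A \<inter> {x\<in>space M. t < g x}) \<le> ennreal (measure M A) * emeasure M {x\<in>space M. t < g x} + ennreal (measure M A * phi_mix M X n)"
          using phi_mix_props(1)[of n]
          by (simp add: emeasure_eq_measure ennreal_mult[symmetric] ennreal_plus[symmetric] mult.commute del: ennreal_plus)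
        then show ?thesis using True tK by simp
      qed
    qed
  qed
  also have "\<dots> = ennreal (measure M A) * (\<integral>\<^sup>+t. indicator {0..} t * emeasure M {x\<in>space M. t < g x} \<partial>lborel)
      + ennreal (measure M A * phi_mix M X n) * (\<integral>\<^sup>+t. indicator {0..<K} t \<partial>lborel)"
    by (subst nn_integral_add) (auto simp: nn_integral_cmult)
  also have "(\<integral>\<^sup>+t. indicator {0..} t * emeasure M {x\<in>space M. t < g x} \<partial>lborel) = (\<integral>\<^sup>+x. 1 * ennreal (g x) \<partial>M)"
    by (subst layer_cake_w[OF sfM, where w="\<lambda>_. 1"]) (use g(2) in \<open>auto simp: nn_integral_indicator'\<close>)
  also have "(\<integral>\<^sup>+t. indicator {0..<K} t \<partial>lborel) = ennreal K" using K0 by simp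
  finally show ?thesis using K0 phi_mix_props(1)[of n] by (simp add: ennreal_mult[symmetric] mult.assoc)
qed


lemma mix_fun:
  fixes f g :: "'a \<Rightarrow> real"
  assumes k: "1 \<le> k"
    and f: "f \<in> borel_measurable (Msub M X {1..k})" "\<And>\<omega>. \<omega>\<in>space M \<Longrightarrow> 0 \<le> f \<omega>" "\<And>\<omega>. \<omega>\<in>space M \<Longrightarrow> f \<omega> \<le> Kf"
    and g: "g \<in> borel_measurable (Msub M X {k+n..})" "\<And>\<omega>. \<omega>\<in>space M \<Longrightarrow> 0 \<le> g \<omega>" "\<And>\<omega>. \<omega>\<in>space M \<Longrightarrow> g \<omega> \<le> K"
  shows "expectation (\<lambda>\<omega>. f \<omega> * g \<omega>) \<le> expectation f * (expectation g + phi_mix M X n * K)"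
proof -
  have s1: "{1..k} \<subseteq> {1::nat..}" "{k+n..} \<subseteq> {1::nat..}" using k by auto
  have gM[measurable]: "g \<in> borel_measurable M" using Msub_M[OF s1(2) g(1)] .
  have fM[measurable]: "f \<in> borel_measurable M" using Msub_M[OF s1(1) f(1)] .
  have K0: "0 \<le> K" using g(2,3)[of "SOME x. x \<in> space M"] not_empty some_in_eq by (metis order.trans)
  have intf: "integrable M f" using f by (intro integrable_const_bound[where B=Kf]) auto
  have intg: "integrable M g" using g by (intro integrable_const_bound[where B=K]) auto
  have intfg: "integrable M (\<lambda>\<omega>. f \<omega> * g \<omega>)"
  proof (rule integrable_const_bound[where B="Kf*K"])
    show "AE x in M. norm (f x * g x) \<le> Kf * K"
    proof (rule AE_I2)
      fix x assume x: "x \<in> space M"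
      then have "f x * g x \<le> Kf * K" using f(2,3) g(2,3) by (intro mult_mono) (auto intro: order.trans)
      then show "norm (f x * g x) \<le> Kf * K" using f(2) g(2) x by simp
    qed
  qed simp
  have Agen: "{x\<in>space M. t < f x} \<in> gen_sigma M X {1..k}" for t
  proof -
    have "{x\<in>space M. t < f x} = f -` {t<..} \<inter> space (Msub M X {1..k})" by auto
    also have "\<dots> \<in> sets (Msub M X {1..k})" using measurable_sets[OF f(1)] by simp
    finally show ?thesis using sets_Msub by simp
  qed
  let ?c = "(\<integral>\<^sup>+x. ennreal (g x) \<partial>M) + ennreal (phi_mix M X n * K)"
  have "(\<integral>\<^sup>+x. ennreal (g x) * ennreal (f x) \<partial>M) =
    (\<integral>\<^sup>+t. indicator {0..} t * (\<integral>\<^sup>+x. ennreal (g x) * indicator {x\<in>space M. t < f x} x \<partial>M) \<partial>lborel)"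
    by (rule layer_cake_w[OF sfM]) (use f(2) in auto)
  also have "\<dots> \<le> (\<integral>\<^sup>+t. indicator {0..} t * emeasure M {x\<in>space M. t < f x} * ?c \<partial>lborel)"
  proof (rule nn_integral_mono)
    fix t :: real
    have "(\<integral>\<^sup>+x. ennreal (g x) * indicator {x\<in>space M. t < f x} x \<partial>M) = (\<integral>\<^sup>+x. indicator {x\<in>space M. t < f x} x * ennreal (g x) \<partial>M)"
      by (simp add: mult.commute)
    also have "\<dots> \<le> ennreal (measure M {x\<in>space M. t < f x}) * (\<integral>\<^sup>+x. ennreal (g x) \<partial>M) + ennreal (measure M {x\<in>space M. t < f x} * phi_mix M X n * K)"
      by (rule mix_ind[OF k Agen g])
    also have "\<dots> = emeasure M {x\<in>space M. t < f x} * ?c"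
      using phi_mix_props(1)[of n] K0
      by (simp add: emeasure_eq_measure distrib_left ennreal_mult[symmetric] mult.assoc)
    finally show "indicator {0..} t * (\<integral>\<^sup>+x. ennreal (g x) * indicator {x\<in>space M. t < f x} x \<partial>M)
       \<le> indicator {0..} t * emeasure M {x\<in>space M. t < f x} * ?c"
      by (simp add: mult.assoc mult_left_mono)
  qed
  also have "\<dots> = (\<integral>\<^sup>+t. indicator {0..} t * emeasure M {x\<in>space M. t < f x} \<partial>lborel) * ?c"
    by (rule nn_integral_multc) measurable
  also have "(\<integral>\<^sup>+t. indicator {0..} t * emeasure M {x\<in>space M. t < f x} \<partial>lborel) = (\<integral>\<^sup>+x. 1 * ennreal (f x) \<partial>M)"
    by (subst layer_cake_w[OF sfM, where w="\<lambda>_. 1"]) (use f(2) in \<open>auto simp: nn_integral_indicator'\<close>)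
  finally have le: "(\<integral>\<^sup>+x. ennreal (g x) * ennreal (f x) \<partial>M) \<le> (\<integral>\<^sup>+x. ennreal (f x) \<partial>M) * ?c" by simp
  have e1: "(\<integral>\<^sup>+x. ennreal (g x) * ennreal (f x) \<partial>M) = ennreal (expectation (\<lambda>\<omega>. f \<omega> * g \<omega>))"
  proof -
    have "(\<integral>\<^sup>+x. ennreal (g x) * ennreal (f x) \<partial>M) = (\<integral>\<^sup>+x. ennreal (f x * g x) \<partial>M)"
      using f(2) g(2) by (intro nn_integral_cong) (simp add: ennreal_mult mult.commute)
    also have "\<dots> = ennreal (expectation (\<lambda>\<omega>. f \<omega> * g \<omega>))"
      using f(2) g(2) by (intro nn_integral_eq_integral intfg) auto
    finally show ?thesis .
  qed
  have e2: "(\<integral>\<^sup>+x. ennreal (f x) \<partial>M) = ennreal (expectation f)"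
    using f(2) by (intro nn_integral_eq_integral intf) auto
  have e3: "(\<integral>\<^sup>+x. ennreal (g x) \<partial>M) = ennreal (expectation g)"
    using g(2) by (intro nn_integral_eq_integral intg) auto
  have Ef0: "0 \<le> expectation f" using f(2) by (simp add: integral_nonneg)
  have Eg0: "0 \<le> expectation g" using g(2) by (simp add: integral_nonneg)
  have "ennreal (expectation (\<lambda>\<omega>. f \<omega> * g \<omega>)) \<le> ennreal (expectation f * (expectation g + phi_mix M X n * K))"
    using le unfolding e1 e2 e3 using Ef0 Eg0 phi_mix_props(1)[of n] K0
    by (simp add: ennreal_mult[symmetric] ennreal_plus[symmetric] del: ennreal_plus)
  then show ?thesis
    using Ef0 Eg0 phi_mix_props(1)[of n] K0 by (subst (asm) ennreal_le_iff) auto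
qed


end

lemma intb: "f \<in> borel_measurable M \<Longrightarrow> finite_measure M \<Longrightarrow> (\<And>\<omega>. \<omega> \<in> space M \<Longrightarrow> \<bar>f \<omega>\<bar> \<le> (B::real)) \<Longrightarrow> integrable M f"
  by (rule finite_measure.integrable_const_bound[where B=B]) auto

locale mixint = mixseq +
  fixes lo hi \<nu> :: real
  assumes nu: "\<And>i. 1 \<le> i \<Longrightarrow> prob {\<omega>\<in>space M. lo < X i \<omega> \<and> X i \<omega> \<le> hi} = \<nu>"
begin

definition W :: "nat \<Rightarrow> 'a \<Rightarrow> real" where "W i \<omega> = (if lo < X i \<omega> \<and> X i \<omega> \<le> hi then 1 else 0)"
definition Z :: "nat \<Rightarrow> 'a \<Rightarrow> real" where "Z i \<omega> = W i \<omega> - \<nu>"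
definition AA :: "nat \<Rightarrow> 'a set" where "AA i = {\<omega>\<in>space M. lo < X i \<omega> \<and> X i \<omega> \<le> hi}"

lemma W_Msub: "i \<in> I \<Longrightarrow> W i \<in> borel_measurable (Msub M X I)"
proof -
  assume "i \<in> I"
  note [measurable] = X_Msub[OF this]
  show ?thesis unfolding W_def[abs_def] by measurable
qed

lemma Z_Msub: "i \<in> I \<Longrightarrow> Z i \<in> borel_measurable (Msub M X I)"
proof -
  assume "i \<in> I"
  note [measurable] = W_Msub[OF this]
  show ?thesis unfolding Z_def[abs_def] by measurable
qed

lemma W_M[measurable]: "1 \<le> i \<Longrightarrow> W i \<in> borel_measurable M"
  using Msub_M[of "{i}" "W i"] W_Msub[of i "{i}"] by auto

lemma Z_M[measurable]: "1 \<le> i \<Longrightarrow> Z i \<in> borel_measurable M"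
  using Msub_M[of "{i}" "Z i"] Z_Msub[of i "{i}"] by auto

lemma nu01: "0 \<le> \<nu>" "\<nu> \<le> 1"
proof -
  have e: "prob {\<omega>\<in>space M. lo < X 1 \<omega> \<and> X 1 \<omega> \<le> hi} = \<nu>" using nu[of 1] by simp
  show "0 \<le> \<nu>" using measure_nonneg unfolding e[symmetric] by blast
  show "\<nu> \<le> 1" using prob_le_1 unfolding e[symmetric] by blast
qed

lemma W01: "0 \<le> W i \<omega>" "W i \<omega> \<le> 1"
  unfolding W_def by auto

lemma Z_bnd: "\<bar>Z i \<omega>\<bar> \<le> 1"
  unfolding Z_def W_def using nu01 by (simp add: abs_le_iff)

lemma AA_gen: "i \<in> I \<Longrightarrow> AA i \<in> gen_sigma M X I"
proof -
  assume i: "i \<in> I"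
  have "AA i = X i -` {lo<..hi} \<inter> space M" unfolding AA_def by auto
  moreover have "X i -` {lo<..hi} \<inter> space M \<in> {X i -` B \<inter> space M | B. B \<in> sets borel}"
    by (rule CollectI, rule exI[of _ "{lo<..hi}"]) simp
  ultimately have "AA i \<in> (\<Union>i\<in>I. {X i -` B \<inter> space M | B. B \<in> sets borel})" using i by (intro UN_I[OF i]) simp
  then show ?thesis unfolding gen_sigma_def by (rule sigma_sets.Basic)
qed

lemma AA_M: "1 \<le> i \<Longrightarrow> AA i \<in> sets M"
  using AA_gen[of i "{i}"] gen_sigma_sub[of "{i}"] by auto

lemma W_ind: "\<omega> \<in> space M \<Longrightarrow> W i \<omega> = indicator (AA i) \<omega>"
  unfolding W_def AA_def by (auto simp: indicator_def)

lemma EW: "1 \<le> i \<Longrightarrow> expectation (W i) = \<nu>"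
proof -
  assume i: "1 \<le> i"
  have "expectation (W i) = expectation (indicator (AA i))"
    by (intro Bochner_Integration.integral_cong) (auto simp: W_ind)
  also have "\<dots> = \<nu>" using AA_M[OF i] nu[OF i] unfolding AA_def by simp
  finally show ?thesis .
qed

lemma intW: "1 \<le> i \<Longrightarrow> integrable M (W i)"
  using W01 by (intro intb[OF W_M]) (auto simp: finite_measure_axioms)

lemma intZ: "1 \<le> i \<Longrightarrow> integrable M (Z i)"
  using Z_bnd by (intro intb[OF Z_M]) (auto simp: finite_measure_axioms)

lemma EZ: "1 \<le> i \<Longrightarrow> expectation (Z i) = 0"
proof -
  assume i: "1 \<le> i"
  have "expectation (Z i) = expectation (W i) - expectation (\<lambda>_. \<nu>)"
    unfolding Z_def[abs_def] using intW[OF i] by (subst Bochner_Integration.integral_diff) auto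
  then show ?thesis using EW[OF i] prob_space by simp
qed

lemma EZZ: assumes "1 \<le> i" "1 \<le> j"
  shows "expectation (\<lambda>\<omega>. Z i \<omega> * Z j \<omega>) = prob (AA i \<inter> AA j) - \<nu> * \<nu>"
proof -
  have ww: "expectation (\<lambda>\<omega>. W i \<omega> * W j \<omega>) = prob (AA i \<inter> AA j)"
  proof -
    have "expectation (\<lambda>\<omega>. W i \<omega> * W j \<omega>) = expectation (indicator (AA i \<inter> AA j))"
      by (intro Bochner_Integration.integral_cong) (auto simp: W_ind indicator_def)
    also have "\<dots> = prob (AA i \<inter> AA j)" using AA_M[OF assms(1)] AA_M[OF assms(2)] by simp
    finally show ?thesis .
  qed
  have iww: "integrable M (\<lambda>\<omega>. W i \<omega> * W j \<omega>)"
    using W01 assms by (intro intb) (auto simp: finite_measure_axioms abs_mult intro: mult_le_one)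
  have eq: "(\<lambda>\<omega>. Z i \<omega> * Z j \<omega>) = (\<lambda>\<omega>. (W i \<omega> * W j \<omega> - \<nu> * W i \<omega>) - (\<nu> * W j \<omega> - \<nu> * \<nu>))"
    unfolding Z_def by (auto simp: algebra_simps)
  have "expectation (\<lambda>\<omega>. Z i \<omega> * Z j \<omega>) = (expectation (\<lambda>\<omega>. W i \<omega> * W j \<omega>) - \<nu> * expectation (W i)) - (\<nu> * expectation (W j) - \<nu> * \<nu>)"
    unfolding eq using iww intW[OF assms(1)] intW[OF assms(2)] prob_space
    by (simp add: Bochner_Integration.integral_diff)
  then show ?thesis using ww EW assms by simp
qed

lemma cov: assumes "1 \<le> i" "i < j"
  shows "\<bar>expectation (\<lambda>\<omega>. Z i \<omega> * Z j \<omega>)\<bar> \<le> phi_mix M X (j - i) * \<nu>"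
proof -
  have a: "AA i \<in> gen_sigma M X {1..i}" using assms by (intro AA_gen) auto
  have b: "AA j \<in> gen_sigma M X {i + (j-i)..}" using assms by (intro AA_gen) auto
  have pa: "prob (AA i) = \<nu>" "prob (AA j) = \<nu>" using nu assms unfolding AA_def by auto
  show ?thesis using mix_set[OF assms(1) a b] EZZ[of i j] assms pa by simp
qed

lemma var: assumes "1 \<le> i" shows "expectation (\<lambda>\<omega>. Z i \<omega> * Z i \<omega>) \<le> \<nu>"
proof -
  have "prob (AA i) = \<nu>" using nu assms unfolding AA_def by auto
  then show ?thesis using EZZ[OF assms assms] nu01 by simp
qed


abbreviation "Sphi \<equiv> (\<Sum>k. phi_mix M X (Suc k))"

lemma side1: assumes "summable (\<lambda>k. phi_mix M X (Suc k))" "finite I"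
  shows "(\<Sum>j\<in>{j\<in>I. i < j}. phi_mix M X (j - i)) \<le> Sphi"
proof -
  have inj: "inj_on (\<lambda>j. j - i - 1) {j\<in>I. i < j}" by (auto simp: inj_on_def)
  have "(\<Sum>j\<in>{j\<in>I. i < j}. phi_mix M X (j - i)) = (\<Sum>j\<in>{j\<in>I. i < j}. phi_mix M X (Suc (j - i - 1)))"
    by (intro sum.cong) (auto simp: Suc_diff_Suc)
  also have "\<dots> = (\<Sum>k\<in>(\<lambda>j. j - i - 1) ` {j\<in>I. i < j}. phi_mix M X (Suc k))"
    using sum.reindex[OF inj, of "\<lambda>k. phi_mix M X (Suc k)"] by simp
  also have "\<dots> \<le> Sphi"
    using assms by (intro sum_le_suminf) (auto simp: phi_mix_props(1))
  finally show ?thesis .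
qed

lemma side2: assumes "summable (\<lambda>k. phi_mix M X (Suc k))" "finite I"
  shows "(\<Sum>j\<in>{j\<in>I. j < i}. phi_mix M X (i - j)) \<le> Sphi"
proof -
  have inj: "inj_on (\<lambda>j. i - j - 1) {j\<in>I. j < i}" by (auto simp: inj_on_def)
  have "(\<Sum>j\<in>{j\<in>I. j < i}. phi_mix M X (i - j)) = (\<Sum>j\<in>{j\<in>I. j < i}. phi_mix M X (Suc (i - j - 1)))"
    by (intro sum.cong) (auto simp: Suc_diff_Suc)
  also have "\<dots> = (\<Sum>k\<in>(\<lambda>j. i - j - 1) ` {j\<in>I. j < i}. phi_mix M X (Suc k))"
    using sum.reindex[OF inj, of "\<lambda>k. phi_mix M X (Suc k)"] by simp
  also have "\<dots> \<le> Sphi"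
    using assms by (intro sum_le_suminf) (auto simp: phi_mix_props(1))
  finally show ?thesis .
qed

lemma intZZ: "1 \<le> i \<Longrightarrow> 1 \<le> j \<Longrightarrow> integrable M (\<lambda>\<omega>. Z i \<omega> * Z j \<omega>)"
  using Z_bnd by (intro intb) (auto simp: finite_measure_axioms abs_mult intro: mult_le_one)

lemma EZZ_le: assumes "1 \<le> i" "1 \<le> j"
  shows "expectation (\<lambda>\<omega>. Z i \<omega> * Z j \<omega>) \<le> \<nu> * ((if j = i then 1 else 0) + (if i < j then phi_mix M X (j - i) else 0) + (if j < i then phi_mix M X (i - j) else 0))"
proof -
  consider "i = j" | "i < j" | "j < i" by linarith
  then show ?thesis
  proof cases
    case 1 then show ?thesis using var[OF assms(1)] by simp
  next
    case 2 then show ?thesis using cov[OF assms(1) 2] by (simp add: mult.commute)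
  next
    case 3
    have "expectation (\<lambda>\<omega>. Z i \<omega> * Z j \<omega>) = expectation (\<lambda>\<omega>. Z j \<omega> * Z i \<omega>)" by (simp add: mult.commute)
    then show ?thesis using cov[OF assms(2) 3] 3 by (simp add: mult.commute)
  qed
qed

lemma block2:
  assumes sm: "summable (\<lambda>k. phi_mix M X (Suc k))" and I: "finite I" "I \<subseteq> {1..}"
  shows "expectation (\<lambda>\<omega>. (\<Sum>i\<in>I. Z i \<omega>)^2) \<le> real (card I) * \<nu> * (1 + 2 * Sphi)"
proof -
  have sq: "(\<lambda>\<omega>. (\<Sum>i\<in>I. Z i \<omega>)^2) = (\<lambda>\<omega>. \<Sum>i\<in>I. \<Sum>j\<in>I. Z i \<omega> * Z j \<omega>)"
    by (auto simp: power2_eq_square sum_product)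
  have "expectation (\<lambda>\<omega>. \<Sum>i\<in>I. \<Sum>j\<in>I. Z i \<omega> * Z j \<omega>) = (\<Sum>i\<in>I. \<Sum>j\<in>I. expectation (\<lambda>\<omega>. Z i \<omega> * Z j \<omega>))"
  proof -
    have "expectation (\<lambda>\<omega>. \<Sum>i\<in>I. \<Sum>j\<in>I. Z i \<omega> * Z j \<omega>) = (\<Sum>i\<in>I. expectation (\<lambda>\<omega>. \<Sum>j\<in>I. Z i \<omega> * Z j \<omega>))"
    proof (rule Bochner_Integration.integral_sum)
      fix i assume "i \<in> I"
      then show "integrable M (\<lambda>x. \<Sum>j\<in>I. Z i x * Z j x)" using I by (intro Bochner_Integration.integrable_sum intZZ) auto
    qed
    also have "\<dots> = (\<Sum>i\<in>I. \<Sum>j\<in>I. expectation (\<lambda>\<omega>. Z i \<omega> * Z j \<omega>))"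
      using I by (intro sum.cong refl Bochner_Integration.integral_sum intZZ) auto
    finally show ?thesis .
  qed
  also have "\<dots> \<le> (\<Sum>i\<in>I. \<nu> * (1 + 2 * Sphi))"
  proof (rule sum_mono)
    fix i assume i: "i \<in> I"
    have "(\<Sum>j\<in>I. expectation (\<lambda>\<omega>. Z i \<omega> * Z j \<omega>)) \<le>
       (\<Sum>j\<in>I. \<nu> * ((if j = i then 1 else 0) + (if i < j then phi_mix M X (j - i) else 0) + (if j < i then phi_mix M X (i - j) else 0)))"
      using I i by (intro sum_mono EZZ_le) auto
    also have "\<dots> = \<nu> * ((\<Sum>j\<in>I. (if j = i then 1 else 0)) + (\<Sum>j\<in>I. if i < j then phi_mix M X (j - i) else 0) + (\<Sum>j\<in>I. if j < i then phi_mix M X (i - j) else 0))"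
      by (simp only: sum.distrib[symmetric] sum_distrib_left)
    also have "(\<Sum>j\<in>I. if i < j then phi_mix M X (j - i) else 0) = (\<Sum>j\<in>{j\<in>I. i < j}. phi_mix M X (j - i))"
      using I by (simp add: sum.inter_filter)
    also have "(\<Sum>j\<in>I. if j < i then phi_mix M X (i - j) else 0) = (\<Sum>j\<in>{j\<in>I. j < i}. phi_mix M X (i - j))"
      using I by (simp add: sum.inter_filter)
    also have "(\<Sum>j\<in>I. (if j = i then 1 else 0)) = (1::real)"
      using I i by simp
    also have "\<nu> * (1 + (\<Sum>j\<in>{j\<in>I. i < j}. phi_mix M X (j - i)) + (\<Sum>j\<in>{j\<in>I. j < i}. phi_mix M X (i - j))) \<le> \<nu> * (1 + 2 * Sphi)"
      using side1[OF sm I(1), of i] side2[OF sm I(1), of i] nu01 by (intro mult_left_mono) auto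
    finally show "(\<Sum>j\<in>I. expectation (\<lambda>\<omega>. Z i \<omega> * Z j \<omega>)) \<le> \<nu> * (1 + 2 * Sphi)" .
  qed
  also have "\<dots> = real (card I) * \<nu> * (1 + 2 * Sphi)" by simp
  finally show ?thesis unfolding sq .
qed

lemma block_exp:
  assumes sm: "summable (\<lambda>k. phi_mix M X (Suc k))" and I: "finite I" "I \<subseteq> {1..}"
    and lam: "\<bar>lam\<bar> * real (card I) \<le> 1"
  shows "expectation (\<lambda>\<omega>. exp (lam * (\<Sum>i\<in>I. Z i \<omega>))) \<le> 1 + lam^2 * (real (card I) * \<nu> * (1 + 2 * Sphi))"
proof -
  have ZM[measurable]: "\<And>i. i \<in> I \<Longrightarrow> Z i \<in> borel_measurable M" using I Z_M by auto
  have SM: "(\<lambda>\<omega>. \<Sum>i\<in>I. Z i \<omega>) \<in> borel_measurable M" by measurable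
  have bS: "\<bar>\<Sum>i\<in>I. Z i \<omega>\<bar> \<le> real (card I)" for \<omega>
  proof -
    have "\<bar>\<Sum>i\<in>I. Z i \<omega>\<bar> \<le> (\<Sum>i\<in>I. \<bar>Z i \<omega>\<bar>)" by (rule sum_abs)
    also have "\<dots> \<le> (\<Sum>i\<in>I. 1)" by (intro sum_mono Z_bnd)
    finally show ?thesis by simp
  qed
  have by1: "\<bar>lam * (\<Sum>i\<in>I. Z i \<omega>)\<bar> \<le> 1" for \<omega>
  proof -
    have "\<bar>lam * (\<Sum>i\<in>I. Z i \<omega>)\<bar> = \<bar>lam\<bar> * \<bar>\<Sum>i\<in>I. Z i \<omega>\<bar>" by (simp add: abs_mult)
    also have "\<dots> \<le> \<bar>lam\<bar> * real (card I)" by (intro mult_left_mono bS) auto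
    finally show ?thesis using lam by simp
  qed
  have iS: "integrable M (\<lambda>\<omega>. \<Sum>i\<in>I. Z i \<omega>)" using I by (intro Bochner_Integration.integrable_sum intZ) auto
  have iS2: "integrable M (\<lambda>\<omega>. (\<Sum>i\<in>I. Z i \<omega>)^2)"
  proof (rule intb[where B="real (card I)^2"])
    fix \<omega> show "\<bar>(\<Sum>i\<in>I. Z i \<omega>)^2\<bar> \<le> real (card I)^2"
      using power_mono[OF bS[of \<omega>], of 2] by simp
  qed (auto simp: finite_measure_axioms)
  have ES: "expectation (\<lambda>\<omega>. \<Sum>i\<in>I. Z i \<omega>) = 0"
  proof -
    have "expectation (\<lambda>\<omega>. \<Sum>i\<in>I. Z i \<omega>) = (\<Sum>i\<in>I. expectation (Z i))"
      using I by (intro Bochner_Integration.integral_sum intZ) auto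
    also have "\<dots> = 0" using I EZ by (intro sum.neutral) auto
    finally show ?thesis .
  qed
  have iE: "integrable M (\<lambda>\<omega>. exp (lam * (\<Sum>i\<in>I. Z i \<omega>)))"
    using by1 by (intro intb[where B="exp 1"]) (auto simp: finite_measure_axioms abs_le_iff)
  have "expectation (\<lambda>\<omega>. exp (lam * (\<Sum>i\<in>I. Z i \<omega>))) \<le> expectation (\<lambda>\<omega>. 1 + lam * (\<Sum>i\<in>I. Z i \<omega>) + lam^2 * (\<Sum>i\<in>I. Z i \<omega>)^2)"
  proof (rule integral_mono)
    show "integrable M (\<lambda>\<omega>. 1 + lam * (\<Sum>i\<in>I. Z i \<omega>) + lam^2 * (\<Sum>i\<in>I. Z i \<omega>)^2)"
      using iS iS2 by auto
    fix \<omega> show "exp (lam * (\<Sum>i\<in>I. Z i \<omega>)) \<le> 1 + lam * (\<Sum>i\<in>I. Z i \<omega>) + lam^2 * (\<Sum>i\<in>I. Z i \<omega>)^2"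
      using exp_quad[OF by1[of \<omega>]] by (simp add: power_mult_distrib)
  qed (rule iE)
  also have "\<dots> = 1 + lam * expectation (\<lambda>\<omega>. \<Sum>i\<in>I. Z i \<omega>) + lam^2 * expectation (\<lambda>\<omega>. (\<Sum>i\<in>I. Z i \<omega>)^2)"
    using iS iS2 prob_space by (simp add: Bochner_Integration.integral_add)
  also have "\<dots> \<le> 1 + lam^2 * (real (card I) * \<nu> * (1 + 2 * Sphi))"
    unfolding ES using block2[OF sm I] by (simp add: mult_left_mono)
  finally show ?thesis .
qed


definition blk :: "nat \<Rightarrow> nat \<Rightarrow> nat \<Rightarrow> nat set" where
  "blk n m b = {i \<in> {1..n}. (i - 1) div m = b}"

definition BS :: "nat \<Rightarrow> nat \<Rightarrow> nat \<Rightarrow> 'a \<Rightarrow> real" where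
  "BS n m b \<omega> = (\<Sum>i\<in>blk n m b. Z i \<omega>)"

lemma blk_fin: "finite (blk n m b)" unfolding blk_def by auto
lemma blk_pos: "blk n m b \<subseteq> {1..}" unfolding blk_def by auto
lemma blk_range: assumes "1 \<le> m" "i \<in> blk n m b" shows "b * m + 1 \<le> i" "i \<le> b * m + m"
proof -
  have i: "1 \<le> i" "(i - 1) div m = b" using assms unfolding blk_def by auto
  have e: "b * m + (i - 1) mod m = i - 1" using div_mult_mod_eq[of "i - 1" m] unfolding i(2) .
  have l: "(i - 1) mod m < m" using assms(1) by simp
  show "b * m + 1 \<le> i" using e i(1) by linarith
  show "i \<le> b * m + m" using e l i(1) by linarith
qed
lemma blk_card: assumes "1 \<le> m" shows "card (blk n m b) \<le> m"
proof -
  have "blk n m b \<subseteq> {b * m + 1 .. b * m + m}" using blk_range[OF assms] by auto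
  then have "card (blk n m b) \<le> card {b * m + 1 .. b * m + m}" by (intro card_mono) auto
  then show ?thesis by simp
qed

lemma BS_Msub: "blk n m b \<subseteq> I \<Longrightarrow> BS n m b \<in> borel_measurable (Msub M X I)"
proof -
  assume sub: "blk n m b \<subseteq> I"
  have "(\<lambda>\<omega>. \<Sum>i\<in>blk n m b. Z i \<omega>) \<in> borel_measurable (Msub M X I)"
    using sub by (intro borel_measurable_sum Z_Msub) auto
  then show ?thesis unfolding BS_def[abs_def] .
qed

lemma BS_bnd: assumes "1 \<le> m" shows "\<bar>BS n m b \<omega>\<bar> \<le> m"
proof -
  have "\<bar>BS n m b \<omega>\<bar> \<le> (\<Sum>i\<in>blk n m b. \<bar>Z i \<omega>\<bar>)" unfolding BS_def by (rule sum_abs)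
  also have "\<dots> \<le> (\<Sum>i\<in>blk n m b. 1)" by (intro sum_mono Z_bnd)
  also have "\<dots> \<le> m" using blk_card[OF assms] by simp
  finally show ?thesis .
qed

lemma group_exp:
  assumes m: "1 \<le> m" and lam: "\<bar>lam\<bar> * real m \<le> 1"
  shows "finite S \<Longrightarrow> S \<subseteq> {..<N} \<Longrightarrow> (\<forall>b\<in>S. Suc b \<notin> S) \<Longrightarrow>
    expectation (\<lambda>\<omega>. exp (lam * (\<Sum>b\<in>S. BS n m b \<omega>))) \<le>
      (\<Prod>b\<in>S. expectation (\<lambda>\<omega>. exp (lam * BS n m b \<omega>)) + exp 1 * phi_mix M X (m + 1))"
proof (induction N arbitrary: S)
  case 0
  then have "S = {}" by auto
  then show ?case by (simp add: prob_space)
next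
  case (Suc N)
  show ?case
  proof (cases "N \<in> S")
    case False
    then have "S \<subseteq> {..<N}" using Suc.prems by (auto simp: less_Suc_eq)
    then show ?thesis using Suc by blast
  next
    case NS: True
    define T where "T = S - {N}"
    have ST: "S = insert N T" "N \<notin> T" using NS T_def by auto
    have fT: "finite T" using Suc.prems T_def by auto
    have Tsub: "T \<subseteq> {..<N}" using Suc.prems T_def by auto
    have Tsub2: "\<And>b. b \<in> T \<Longrightarrow> Suc b < N"
    proof -
      fix b assume b: "b \<in> T"
      then have "b < N" using Tsub by auto
      moreover have "Suc b \<noteq> N" using b Suc.prems(3) NS T_def by auto
      ultimately show "Suc b < N" by linarith
    qed
    have Tcons: "\<forall>b\<in>T. Suc b \<notin> T" using Suc.prems(3) T_def by auto
    have IH: "expectation (\<lambda>\<omega>. exp (lam * (\<Sum>b\<in>T. BS n m b \<omega>))) \<le>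
      (\<Prod>b\<in>T. expectation (\<lambda>\<omega>. exp (lam * BS n m b \<omega>)) + exp 1 * phi_mix M X (m + 1))"
      using Suc.IH[OF fT Tsub Tcons] .
    define g where "g \<omega> = exp (lam * BS n m N \<omega>)" for \<omega>
    have gb: "g \<omega> \<le> exp 1" for \<omega>
    proof -
      have "lam * BS n m N \<omega> \<le> \<bar>lam\<bar> * \<bar>BS n m N \<omega>\<bar>" by (simp add: abs_mult[symmetric])
      also have "\<dots> \<le> \<bar>lam\<bar> * m" using BS_bnd[OF m] by (intro mult_left_mono) auto
      finally show ?thesis unfolding g_def using lam by simp
    qed
    have Eg0: "0 \<le> expectation g" unfolding g_def by (simp add: integral_nonneg)
    have phi0: "0 \<le> phi_mix M X (m + 1)" by (rule phi_mix_props(1))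
    have split: "(\<lambda>\<omega>. exp (lam * (\<Sum>b\<in>S. BS n m b \<omega>))) = (\<lambda>\<omega>. exp (lam * (\<Sum>b\<in>T. BS n m b \<omega>)) * g \<omega>)"
      unfolding ST g_def using fT ST(2) by (auto simp: algebra_simps exp_add)
    have prodS: "(\<Prod>b\<in>S. expectation (\<lambda>\<omega>. exp (lam * BS n m b \<omega>)) + exp 1 * phi_mix M X (m + 1)) =
       (\<Prod>b\<in>T. expectation (\<lambda>\<omega>. exp (lam * BS n m b \<omega>)) + exp 1 * phi_mix M X (m + 1)) * (expectation g + exp 1 * phi_mix M X (m + 1))"
      unfolding ST g_def using fT ST(2) by (simp add: mult.commute)
    show ?thesis
    proof (cases "T = {}")
      case True
      then show ?thesis unfolding split prodS using Eg0 phi0 by (simp add: True)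
    next
      case False
      then obtain b0 where "b0 \<in> T" by auto
      then have N2: "2 \<le> N" using Tsub2 by fastforce
      define k where "k = (N - 1) * m"
      have k1: "1 \<le> k" unfolding k_def using N2 m by simp
      have fmeas: "(\<lambda>\<omega>. exp (lam * (\<Sum>b\<in>T. BS n m b \<omega>))) \<in> borel_measurable (Msub M X {1..k})"
      proof -
        have "\<And>b. b \<in> T \<Longrightarrow> BS n m b \<in> borel_measurable (Msub M X {1..k})"
        proof (intro BS_Msub subsetI)
          fix b i assume b: "b \<in> T" and i: "i \<in> blk n m b"
          have "Suc b < N" using Tsub2[OF b] .
          then have "Suc b \<le> N - 1" by linarith
          then have "Suc b * m \<le> (N - 1) * m" by (rule mult_le_mono1)
          then have "b * m + m \<le> (N - 1) * m" by simp
          then show "i \<in> {1..k}" using blk_range[OF m i] blk_pos i unfolding k_def by auto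
        qed
        then show ?thesis by measurable
      qed
      have gmeas: "g \<in> borel_measurable (Msub M X {k + (m + 1)..})"
      proof -
        have "BS n m N \<in> borel_measurable (Msub M X {k + (m + 1)..})"
        proof (intro BS_Msub subsetI)
          fix i assume i: "i \<in> blk n m N"
          have "k + (m + 1) = N * m + 1" unfolding k_def using N2 by (simp add: algebra_simps mult_eq_if)
          then show "i \<in> {k + (m + 1)..}" using blk_range[OF m i] by auto
        qed
        then show ?thesis unfolding g_def[abs_def] by measurable
      qed
      have fb: "exp (lam * (\<Sum>b\<in>T. BS n m b \<omega>)) \<le> exp (\<bar>lam\<bar> * (real m * card T))" for \<omega>
      proof -
        have "\<bar>\<Sum>b\<in>T. BS n m b \<omega>\<bar> \<le> (\<Sum>b\<in>T. \<bar>BS n m b \<omega>\<bar>)" by (rule sum_abs)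
        also have "\<dots> \<le> (\<Sum>b\<in>T. real m)" by (intro sum_mono BS_bnd m)
        finally have "\<bar>\<Sum>b\<in>T. BS n m b \<omega>\<bar> \<le> real m * card T" by (simp add: mult.commute)
        then have "\<bar>lam\<bar> * \<bar>\<Sum>b\<in>T. BS n m b \<omega>\<bar> \<le> \<bar>lam\<bar> * (real m * card T)"
          by (intro mult_left_mono) auto
        moreover have "lam * (\<Sum>b\<in>T. BS n m b \<omega>) \<le> \<bar>lam\<bar> * \<bar>\<Sum>b\<in>T. BS n m b \<omega>\<bar>"
          by (simp add: abs_mult[symmetric])
        ultimately have "lam * (\<Sum>b\<in>T. BS n m b \<omega>) \<le> \<bar>lam\<bar> * (real m * card T)" by linarith
        then show ?thesis by simp
      qed
      have "expectation (\<lambda>\<omega>. exp (lam * (\<Sum>b\<in>T. BS n m b \<omega>)) * g \<omega>) \<le>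
         expectation (\<lambda>\<omega>. exp (lam * (\<Sum>b\<in>T. BS n m b \<omega>))) * (expectation g + phi_mix M X (m + 1) * exp 1)"
        by (rule mix_fun[OF k1 fmeas _ fb gmeas _ gb]) (auto simp: g_def)
      also have "\<dots> \<le> (\<Prod>b\<in>T. expectation (\<lambda>\<omega>. exp (lam * BS n m b \<omega>)) + exp 1 * phi_mix M X (m + 1)) * (expectation g + exp 1 * phi_mix M X (m + 1))"
        unfolding mult.commute[of "phi_mix M X (m + 1)" "exp 1"] using IH Eg0 phi0 by (intro mult_right_mono) auto
      finally show ?thesis unfolding split prodS .
    qed
  qed
qed


lemma sum_split: assumes m: "1 \<le> m"
  shows "(\<Sum>i\<in>{1..n}. Z i \<omega>) = (\<Sum>r\<in>{..<2::nat}. \<Sum>b\<in>{b\<in>{..n div m}. b mod 2 = r}. BS n m b \<omega>)"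
proof -
  have "(\<Sum>b\<in>{..n div m}. BS n m b \<omega>) = (\<Sum>b\<in>{..n div m}. \<Sum>i\<in>{x. x \<in> {1..n} \<and> (x - 1) div m = b}. Z i \<omega>)"
    unfolding BS_def blk_def by simp
  also have "\<dots> = (\<Sum>i\<in>{1..n}. Z i \<omega>)"
  proof (rule sum.group)
    show "(\<lambda>i. (i - 1) div m) ` {1..n} \<subseteq> {..n div m}"
    proof
      fix x assume "x \<in> (\<lambda>i. (i - 1) div m) ` {1..n}"
      then obtain i where "i \<in> {1..n}" "x = (i - 1) div m" by auto
      moreover have "(i - 1) div m \<le> n div m" using \<open>i \<in> {1..n}\<close> by (intro div_le_mono) auto
      ultimately show "x \<in> {..n div m}" by simp
    qed
  qed auto
  finally have 1: "(\<Sum>b\<in>{..n div m}. BS n m b \<omega>) = (\<Sum>i\<in>{1..n}. Z i \<omega>)" .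
  have 2: "(\<Sum>r\<in>{..<2::nat}. \<Sum>b\<in>{b. b \<in> {..n div m} \<and> b mod 2 = r}. BS n m b \<omega>) = (\<Sum>b\<in>{..n div m}. BS n m b \<omega>)"
    by (rule sum.group) auto
  show ?thesis using 1 2 by simp
qed

lemma Sphi_nonneg: "summable (\<lambda>k. phi_mix M X (Suc k)) \<Longrightarrow> 0 \<le> Sphi"
  by (intro suminf_nonneg) (auto simp: phi_mix_props(1))

lemma onesided:
  assumes sm: "summable (\<lambda>k. phi_mix M X (Suc k))" and m: "1 \<le> m" and s: "\<bar>s\<bar> = 1"
    and B: "finite B" "\<forall>b\<in>B. Suc b \<notin> B"
  shows "prob {\<omega>\<in>space M. u \<le> s * (\<Sum>b\<in>B. BS n m b \<omega>)} \<le>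
     exp (- u / m + card B * (\<nu> * (1 + 2 * Sphi) / m + exp 1 * phi_mix M X (m + 1)))"
proof -
  define lam where "lam = s / m"
  have m0: "0 < real m" using m by simp
  have lamm: "\<bar>lam\<bar> * real m \<le> 1" unfolding lam_def using s m0 by (simp add: abs_div)
  have lam2: "lam^2 = 1 / (real m)^2" unfolding lam_def using s
    by (simp add: power_divide) (metis power2_abs power_one s)
  have BSM[measurable]: "\<And>b. BS n m b \<in> borel_measurable M"
    using Msub_M[OF blk_pos] BS_Msub[OF order.refl] by blast
  let ?SB = "\<lambda>\<omega>. \<Sum>b\<in>B. BS n m b \<omega>"
  have SBM[measurable]: "?SB \<in> borel_measurable M" by measurable
  have SBb: "\<bar>?SB \<omega>\<bar> \<le> real m * card B" for \<omega>
  proof -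
    have "\<bar>?SB \<omega>\<bar> \<le> (\<Sum>b\<in>B. \<bar>BS n m b \<omega>\<bar>)" by (rule sum_abs)
    also have "\<dots> \<le> (\<Sum>b\<in>B. real m)" by (intro sum_mono BS_bnd m)
    finally show ?thesis by (simp add: mult.commute)
  qed
  have iE: "integrable M (\<lambda>\<omega>. exp (lam * ?SB \<omega>))"
  proof (rule intb[where B="exp (\<bar>lam\<bar> * (real m * card B))"])
    fix \<omega>
    have "lam * ?SB \<omega> \<le> \<bar>lam\<bar> * \<bar>?SB \<omega>\<bar>" by (simp add: abs_mult[symmetric])
    also have "\<dots> \<le> \<bar>lam\<bar> * (real m * card B)" using SBb by (intro mult_left_mono) auto
    finally show "\<bar>exp (lam * ?SB \<omega>)\<bar> \<le> exp (\<bar>lam\<bar> * (real m * card B))" by simp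
  qed (auto simp: finite_measure_axioms)
  have C0: "0 \<le> 1 + 2 * Sphi" using Sphi_nonneg[OF sm] by simp
  have phi0: "0 \<le> phi_mix M X (m + 1)" by (rule phi_mix_props(1))
  have set_eq: "{\<omega>\<in>space M. u \<le> s * ?SB \<omega>} = {\<omega>\<in>space M. exp (u / m) \<le> exp (lam * ?SB \<omega>)}"
  proof -
    have "u \<le> s * ?SB \<omega> \<longleftrightarrow> u / m \<le> lam * ?SB \<omega>" for \<omega>
      unfolding lam_def using m0 by (simp add: field_simps)
    then show ?thesis by simp
  qed
  have "prob {\<omega>\<in>space M. u \<le> s * ?SB \<omega>} \<le> expectation (\<lambda>\<omega>. exp (lam * ?SB \<omega>)) / exp (u / m)"
    unfolding set_eq by (rule integral_Markov_inequality_measure[OF iE]) auto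
  also have "expectation (\<lambda>\<omega>. exp (lam * ?SB \<omega>)) \<le>
      (\<Prod>b\<in>B. expectation (\<lambda>\<omega>. exp (lam * BS n m b \<omega>)) + exp 1 * phi_mix M X (m + 1))"
    by (rule group_exp[OF m lamm B(1) _ B(2), of "Suc (Max B)"]) (auto simp: B(1) le_imp_less_Suc)
  also have "\<dots> \<le> (\<Prod>b\<in>B. exp (\<nu> * (1 + 2 * Sphi) / m + exp 1 * phi_mix M X (m + 1)))"
  proof (rule prod_mono)
    fix b assume "b \<in> B"
    have c: "real (card (blk n m b)) \<le> real m" using blk_card[OF m] by simp
    have lc: "\<bar>lam\<bar> * real (card (blk n m b)) \<le> 1"
      using lamm c by (meson abs_ge_zero mult_left_mono order.trans)
    have e1: "expectation (\<lambda>\<omega>. exp (lam * BS n m b \<omega>)) \<le> 1 + lam^2 * (real (card (blk n m b)) * \<nu> * (1 + 2 * Sphi))"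
      using block_exp[OF sm blk_fin blk_pos lc] unfolding BS_def .
    have "lam^2 * (real (card (blk n m b)) * \<nu> * (1 + 2 * Sphi)) \<le> lam^2 * (real m * \<nu> * (1 + 2 * Sphi))"
      using c nu01 C0 by (intro mult_left_mono mult_right_mono) auto
    also have "\<dots> = \<nu> * (1 + 2 * Sphi) / m" unfolding lam2 using m0 by (simp add: power2_eq_square field_simps)
    finally have "expectation (\<lambda>\<omega>. exp (lam * BS n m b \<omega>)) + exp 1 * phi_mix M X (m + 1) \<le>
       1 + (\<nu> * (1 + 2 * Sphi) / m + exp 1 * phi_mix M X (m + 1))" using e1 by linarith
    also have "\<dots> \<le> exp (\<nu> * (1 + 2 * Sphi) / m + exp 1 * phi_mix M X (m + 1))" by (rule exp_ge_add_one_self)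
    finally show "0 \<le> expectation (\<lambda>\<omega>. exp (lam * BS n m b \<omega>)) + exp 1 * phi_mix M X (m + 1) \<and>
      expectation (\<lambda>\<omega>. exp (lam * BS n m b \<omega>)) + exp 1 * phi_mix M X (m + 1) \<le> exp (\<nu> * (1 + 2 * Sphi) / m + exp 1 * phi_mix M X (m + 1))"
      using phi0 by (auto intro!: add_nonneg_nonneg integral_nonneg)
  qed
  also have "(\<Prod>b\<in>B. exp (\<nu> * (1 + 2 * Sphi) / m + exp 1 * phi_mix M X (m + 1))) = exp (card B * (\<nu> * (1 + 2 * Sphi) / m + exp 1 * phi_mix M X (m + 1)))"
    by (simp add: exp_of_nat_mult[symmetric])
  finally show ?thesis by (simp add: exp_diff[symmetric] divide_right_mono)
qed


lemma tail:
  assumes sm: "summable (\<lambda>k. phi_mix M X (Suc k))" and m: "1 \<le> m"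
  shows "prob {\<omega>\<in>space M. 2 * u \<le> \<bar>\<Sum>i\<in>{1..n}. Z i \<omega>\<bar>} \<le>
     4 * exp (- u / m + (real n / real m + 1) * (\<nu> * (1 + 2 * Sphi) / m + exp 1 * phi_mix M X (m + 1)))"
proof -
  define B where "B r = {b\<in>{..n div m}. b mod 2 = r}" for r :: nat
  define S where "S r \<omega> = (\<Sum>b\<in>B r. BS n m b \<omega>)" for r \<omega>
  define c where "c = \<nu> * (1 + 2 * Sphi) / m + exp 1 * phi_mix M X (m + 1)"
  define E where "E = exp (- u / m + (real n / real m + 1) * c)"
  have c0: "0 \<le> c" unfolding c_def using nu01 Sphi_nonneg[OF sm] phi_mix_props(1)[of "m+1"] m by auto
  have fB: "finite (B r)" for r unfolding B_def by auto
  have ms: "Suc b mod 2 \<noteq> b mod 2" for b :: nat by presburger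
  have cB: "\<forall>b\<in>B r. Suc b \<notin> B r" for r unfolding B_def using ms by auto
  have cardB: "real (card (B r)) \<le> real n / real m + 1" for r
  proof -
    have "card (B r) \<le> card {..n div m}" unfolding B_def by (intro card_mono) auto
    then have "real (card (B r)) \<le> real (n div m) + 1" by simp
    moreover have "real (n div m) \<le> real n / real m"
    proof -
      have "n div m * m \<le> n" by (rule div_times_less_eq_dividend)
      then have "real (n div m) * real m \<le> real n" by (metis of_nat_le_iff of_nat_mult)
      then show ?thesis using m by (simp add: pos_le_divide_eq)
    qed
    ultimately show ?thesis by linarith
  qed
  have BSM[measurable]: "\<And>b. BS n m b \<in> borel_measurable M"
    using Msub_M[OF blk_pos] BS_Msub[OF order.refl] by blast
  have SM[measurable]: "S r \<in> borel_measurable M" for r unfolding S_def[abs_def] by measurable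
  have one: "prob {\<omega>\<in>space M. u \<le> s * S r \<omega>} \<le> E" if "\<bar>s\<bar> = 1" for s r
  proof -
    have "prob {\<omega>\<in>space M. u \<le> s * S r \<omega>} \<le> exp (- u / m + card (B r) * c)"
      using onesided[OF sm m that fB[of r] cB[of r], where u=u and n=n] unfolding S_def c_def by simp
    also have "\<dots> \<le> E" unfolding E_def using cardB[of r] c0 by (intro exp_mono add_left_mono mult_right_mono) auto
    finally show ?thesis .
  qed
  have sumZ: "(\<Sum>i\<in>{1..n}. Z i \<omega>) = S 0 \<omega> + S 1 \<omega>" for \<omega>
    unfolding sum_split[OF m] S_def B_def by (simp add: eval_nat_numeral)
  let ?A = "\<lambda>s r. {\<omega>\<in>space M. u \<le> s * S r \<omega>}"
  have sub: "{\<omega>\<in>space M. 2 * u \<le> \<bar>\<Sum>i\<in>{1..n}. Z i \<omega>\<bar>} \<subseteq> (?A 1 0 \<union> ?A (-1) 0) \<union> (?A 1 1 \<union> ?A (-1) 1)"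
    unfolding sumZ by auto
  have "prob {\<omega>\<in>space M. 2 * u \<le> \<bar>\<Sum>i\<in>{1..n}. Z i \<omega>\<bar>} \<le> prob ((?A 1 0 \<union> ?A (-1) 0) \<union> (?A 1 1 \<union> ?A (-1) 1))"
    using sub by (intro finite_measure_mono) auto
  also have "\<dots> \<le> prob (?A 1 0 \<union> ?A (-1) 0) + prob (?A 1 1 \<union> ?A (-1) 1)"
    by (intro measure_Un_le) auto
  also have "\<dots> \<le> (prob (?A 1 0) + prob (?A (-1) 0)) + (prob (?A 1 1) + prob (?A (-1) 1))"
    by (intro add_mono measure_Un_le) auto
  also have "\<dots> \<le> (E + E) + (E + E)"
    by (intro add_mono one) auto
  finally show ?thesis unfolding E_def c_def by simp
qed

end

definition Dev :: "(nat \<Rightarrow> 'a \<Rightarrow> real) \<Rightarrow> real \<Rightarrow> real \<Rightarrow> real \<Rightarrow> nat \<Rightarrow> 'a \<Rightarrow> real" where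
  "Dev X lo hi \<nu> n \<omega> = (\<Sum>i\<in>{1..n}. (if lo < X i \<omega> \<and> X i \<omega> \<le> hi then 1 else 0) - \<nu>)"

lemma tail_global:
  assumes "prob_space M" and rv: "\<And>i. 1 \<le> i \<Longrightarrow> X i \<in> borel_measurable M"
    and nu: "\<And>i. 1 \<le> i \<Longrightarrow> measure M {\<omega>\<in>space M. lo < X i \<omega> \<and> X i \<omega> \<le> hi} = \<nu>"
    and sm: "summable (\<lambda>k. phi_mix M X (Suc k))" and m: "1 \<le> m"
  shows "measure M {\<omega>\<in>space M. 2 * u \<le> \<bar>Dev X lo hi \<nu> n \<omega>\<bar>} \<le>
     4 * exp (- u / m + (real n / real m + 1) * (\<nu> * (1 + 2 * (\<Sum>k. phi_mix M X (Suc k))) / m + exp 1 * phi_mix M X (m + 1)))"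
proof -
  interpret mixint M X lo hi \<nu>
    by (intro mixint.intro mixint_axioms.intro mixseq.intro mixseq_axioms.intro assms)
  have "Dev X lo hi \<nu> n \<omega> = (\<Sum>i\<in>{1..n}. Z i \<omega>)" for \<omega>
    unfolding Dev_def Z_def W_def ..
  then show ?thesis using tail[OF sm m, of u n] by simp
qed

lemma Dev_M: assumes "\<And>i. 1 \<le> i \<Longrightarrow> X i \<in> borel_measurable M"
  shows "Dev X lo hi \<nu> n \<in> borel_measurable M"
proof -
  have [measurable]: "X i \<in> borel_measurable M" if "i \<in> {1..n}" for i using assms that by auto
  show ?thesis unfolding Dev_def[abs_def] by measurable
qed

lemma Dev_alt: "Dev X lo hi \<nu> n \<omega> = (\<Sum>i\<in>{1..n}. (if lo < X i \<omega> \<and> X i \<omega> \<le> hi then 1 else 0)) - real n * \<nu>"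
  unfolding Dev_def by (simp add: sum_subtractf)

lemma G_identity:
  fixes X :: "nat \<Rightarrow> 'a \<Rightarrow> real"
  assumes n: "1 \<le> n" and Fxi: "F xi = p"
  shows "real n * \<bar>(emp_df X n \<omega> y - F y) - (emp_df X n \<omega> xi - p)\<bar> =
    \<bar>Dev X (min y xi) (max y xi) (F (max y xi) - F (min y xi)) n \<omega>\<bar>"
proof -
  define Sy where "Sy = (\<Sum>i\<in>{1..n}. (if X i \<omega> \<le> y then 1 else (0::real)))"
  define Sx where "Sx = (\<Sum>i\<in>{1..n}. (if X i \<omega> \<le> xi then 1 else (0::real)))"
  have nn: "real n \<noteq> 0" using n by simp
  have E: "real n * ((emp_df X n \<omega> y - F y) - (emp_df X n \<omega> xi - p)) = (Sy - Sx) - real n * (F y - p)"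
    unfolding emp_df_def Sy_def Sx_def using nn by (simp add: right_diff_distrib)
  have ab: "real n * \<bar>(emp_df X n \<omega> y - F y) - (emp_df X n \<omega> xi - p)\<bar> = \<bar>(Sy - Sx) - real n * (F y - p)\<bar>"
    unfolding E[symmetric] abs_mult by simp
  show ?thesis
  proof (cases "xi \<le> y")
    case True
    have "Sy - Sx = (\<Sum>i\<in>{1..n}. (if xi < X i \<omega> \<and> X i \<omega> \<le> y then 1 else 0))"
      unfolding Sy_def Sx_def sum_subtractf[symmetric] using True by (intro sum.cong) auto
    then show ?thesis unfolding ab using True Fxi by (simp add: Dev_alt)
  next
    case False
    have "Sx - Sy = (\<Sum>i\<in>{1..n}. (if y < X i \<omega> \<and> X i \<omega> \<le> xi then 1 else 0))"
      unfolding Sy_def Sx_def sum_subtractf[symmetric] using False by (intro sum.cong) auto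
    then have "(Sy - Sx) - real n * (F y - p) = - Dev X y xi (F xi - F y) n \<omega>"
      using Fxi by (simp add: Dev_alt algebra_simps)
    then show ?thesis unfolding ab using False by simp
  qed
qed

lemma emp_df_mono: "x \<le> y \<Longrightarrow> emp_df X n \<omega> x \<le> emp_df X n \<omega> y"
  unfolding emp_df_def by (intro mult_left_mono sum_mono) auto

lemma interp:
  fixes Fn F :: "real \<Rightarrow> real"
  assumes "mono Fn" "mono F" "y \<le> x" "x \<le> z"
    and "\<bar>(Fn y - F y) - c\<bar> \<le> B" "\<bar>(Fn z - F z) - c\<bar> \<le> B" "F z - F y \<le> D"
  shows "\<bar>(Fn x - F x) - c\<bar> \<le> B + D"
proof -
  have "Fn y \<le> Fn x" "Fn x \<le> Fn z" "F y \<le> F x" "F x \<le> F z" using assms(1-4) by (auto simp: mono_def)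
  then show ?thesis using assms(5-7) by (simp add: abs_le_iff)
qed
lemma F_basic:
  fixes F :: "real \<Rightarrow> real" and Y :: "'a \<Rightarrow> real"
  assumes P: "prob_space M" and Y: "Y \<in> borel_measurable M" and FY: "\<And>x. measure M {\<omega>\<in>space M. Y \<omega> \<le> x} = F x"
  shows "mono F" "0 < p \<Longrightarrow> \<exists>x. F x < p" "p < 1 \<Longrightarrow> \<exists>x. p \<le> F x"
proof -
  interpret prob_space M by (rule P)
  have meas: "{\<omega>\<in>space M. Y \<omega> \<le> x} \<in> sets M" for x using Y by measurable
  show "mono F"
  proof (rule monoI)
    fix x y :: real assume "x \<le> y"
    then have "{\<omega>\<in>space M. Y \<omega> \<le> x} \<subseteq> {\<omega>\<in>space M. Y \<omega> \<le> y}" by auto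
    then show "F x \<le> F y" unfolding FY[symmetric] using meas by (intro finite_measure_mono) auto
  qed
  show "0 < p \<Longrightarrow> \<exists>x. F x < p"
  proof -
    assume p: "0 < p"
    define B where "B k = {\<omega>\<in>space M. Y \<omega> \<le> - real k}" for k :: nat
    have "(\<lambda>k. measure M (B k)) \<longlonglongrightarrow> measure M (\<Inter>k. B k)"
      using meas unfolding B_def by (intro finite_Lim_measure_decseq) (auto simp: decseq_def)
    moreover have "(\<Inter>k. B k) = {}"
    proof (rule ccontr)
      assume "(\<Inter>k. B k) \<noteq> {}"
      then obtain \<omega> where "\<And>k. \<omega> \<in> B k" by blast
      then have "\<And>k. Y \<omega> \<le> - real k" unfolding B_def by auto
      moreover obtain k :: nat where "- Y \<omega> < real k" using reals_Archimedean2 by blast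
      ultimately show False by (metis add.inverse_inverse le_minus_iff not_le)
    qed
    ultimately have "(\<lambda>k. F (- real k)) \<longlonglongrightarrow> 0" unfolding B_def FY by simp
    then have "eventually (\<lambda>k. F (- real k) < p) sequentially" using p by (rule order_tendstoD)
    then show ?thesis by (meson eventually_sequentially order.refl)
  qed
  show "p < 1 \<Longrightarrow> \<exists>x. p \<le> F x"
  proof -
    assume p: "p < 1"
    define A where "A k = {\<omega>\<in>space M. Y \<omega> \<le> real k}" for k :: nat
    have "(\<lambda>k. measure M (A k)) \<longlonglongrightarrow> measure M (\<Union>k. A k)"
      using meas unfolding A_def by (intro finite_Lim_measure_incseq) (auto simp: incseq_def)
    moreover have "(\<Union>k. A k) = space M"
    proof
      show "(\<Union>k. A k) \<subseteq> space M" unfolding A_def by auto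
      show "space M \<subseteq> (\<Union>k. A k)"
      proof
        fix \<omega> assume "\<omega> \<in> space M"
        moreover obtain k :: nat where "Y \<omega> < real k" using reals_Archimedean2 by blast
        ultimately show "\<omega> \<in> (\<Union>k. A k)" unfolding A_def by (auto intro!: exI[of _ k])
      qed
    qed
    ultimately have "(\<lambda>k. F (real k)) \<longlonglongrightarrow> 1" unfolding A_def FY by (simp add: prob_space)
    then have "eventually (\<lambda>k. p < F (real k)) sequentially" using p by (rule order_tendstoD)
    then show ?thesis by (meson eventually_sequentially order.refl less_imp_le)
  qed
qed

lemma xi_prop:
  fixes F :: "real \<Rightarrow> real"
  assumes mono: "mono F" and lo: "\<exists>x. F x < p" and hi: "\<exists>x. p \<le> F x"
    and cont: "isCont F (Inf {x. p \<le> F x})"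
  shows "F (Inf {x. p \<le> F x}) = p"
proof -
  define S where "S = {x. p \<le> F x}"
  define xi where "xi = Inf S"
  have ne: "S \<noteq> {}" using hi unfolding S_def by auto
  obtain x0 where x0: "F x0 < p" using lo by auto
  have lb: "x0 \<le> y" if "y \<in> S" for y
  proof (rule ccontr)
    assume "\<not> x0 \<le> y"
    then have "F y \<le> F x0" using mono by (auto simp: mono_def)
    then show False using that x0 unfolding S_def by auto
  qed
  have bdd: "bdd_below S" using lb by (auto simp: bdd_below_def)
  have tl: "(F \<longlongrightarrow> F xi) (at xi)" using cont unfolding xi_def S_def isCont_def .
  have ge: "p \<le> F xi"
  proof (rule ccontr)
    assume "\<not> p \<le> F xi"
    then have "F xi < p" by simp
    then have "eventually (\<lambda>x. F x < p) (at xi)" by (rule order_tendstoD(2)[OF tl])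
    then obtain d where d: "d > 0" "\<And>x. x \<noteq> xi \<Longrightarrow> dist x xi < d \<Longrightarrow> F x < p"
      unfolding eventually_at by auto
    obtain y where y: "y \<in> S" "y < xi + d" using cInf_lessD[of S "xi + d"] ne d unfolding xi_def by auto
    have "xi \<le> y" using cInf_lower[OF y(1) bdd] unfolding xi_def .
    show False
    proof (cases "y = xi")
      case True then show False using y(1) \<open>F xi < p\<close> unfolding S_def by auto
    next
      case False
      then have "F y < p" using d(2)[of y] y(2) \<open>xi \<le> y\<close> by (auto simp: dist_real_def)
      then show False using y(1) unfolding S_def by auto
    qed
  qed
  have le: "F xi \<le> p"
  proof (rule ccontr)
    assume "\<not> F xi \<le> p"
    then have "p < F xi" by simp
    then have "eventually (\<lambda>x. p < F x) (at xi)" by (rule order_tendstoD(1)[OF tl])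
    then obtain d where d: "d > 0" "\<And>x. x \<noteq> xi \<Longrightarrow> dist x xi < d \<Longrightarrow> p < F x"
      unfolding eventually_at by auto
    have "p < F (xi - d/2)" using d by (intro d(2)) (auto simp: dist_real_def)
    then have "xi - d/2 \<in> S" unfolding S_def by simp
    then have "xi \<le> xi - d/2" using cInf_lower[OF _ bdd] unfolding xi_def by blast
    then show False using d by simp
  qed
  show ?thesis using ge le unfolding xi_def S_def by simp
qed

lemma lip:
  fixes F f :: "real \<Rightarrow> real"
  assumes der: "\<And>x. x \<in> {lo..hi} \<Longrightarrow> (F has_real_derivative f x) (at x)"
    and fb: "\<And>x. x \<in> {lo..hi} \<Longrightarrow> f x \<le> d"
    and xy: "lo \<le> x" "x \<le> y" "y \<le> hi"
  shows "F y - F x \<le> d * (y - x)"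
proof (cases "x = y")
  case True then show ?thesis by simp
next
  case False
  then have "x < y" using xy by simp
  then obtain z where z: "x < z" "z < y" "F y - F x = (y - x) * f z"
    using MVT2[of x y F f] der xy by fastforce
  have "f z \<le> d" using fb z xy by auto
  then show ?thesis unfolding z(3) using \<open>x < y\<close> by (simp add: mult.commute mult_left_mono)
qed

lemma phi_sum:
  fixes phi :: "nat \<Rightarrow> real"
  assumes rate: "phi \<in> O(\<lambda>n. real n powr (-3))" and nn: "\<And>n. 0 \<le> phi n"
  shows "\<exists>c>0. eventually (\<lambda>n. phi n \<le> c * real n powr (-3)) sequentially"
    "summable (\<lambda>k. phi (Suc k))" "summable (\<lambda>k. sqrt (phi (Suc k)))"
proof -
  obtain c where c: "c > 0" "eventually (\<lambda>n. norm (phi n) \<le> c * norm (real n powr (-3))) sequentially"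
    using landau_o.bigE[OF rate] by blast
  have ev: "eventually (\<lambda>n. phi n \<le> c * real n powr (-3)) sequentially"
    using c(2) by eventually_elim (simp add: nn)
  then show "\<exists>c>0. eventually (\<lambda>n. phi n \<le> c * real n powr (-3)) sequentially" using c(1) by blast
  have s1: "summable (\<lambda>n. c * real n powr (-3))"
    by (intro summable_mult) (simp add: summable_real_powr_iff)
  have "summable phi"
    using ev nn by (intro summable_comparison_test_ev[OF _ s1]) (auto elim!: eventually_mono)
  then show "summable (\<lambda>k. phi (Suc k))" by (simp add: summable_Suc_iff)
  have s2: "summable (\<lambda>n. sqrt c * real n powr (-3/2))"
    by (intro summable_mult) (simp add: summable_real_powr_iff)
  have "eventually (\<lambda>n. norm (sqrt (phi n)) \<le> sqrt c * real n powr (-3/2)) sequentially"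
    using ev
  proof eventually_elim
    case (elim n)
    have "sqrt (phi n) \<le> sqrt (c * real n powr (-3))" using elim by simp
    also have "\<dots> = sqrt c * sqrt (real n powr (-3))" by (simp add: real_sqrt_mult)
    also have "sqrt (real n powr (-3)) = real n powr (-3/2)"
      by (subst powr_half_sqrt[symmetric]) (auto simp: powr_powr)
    finally show ?case using nn[of n] by simp
  qed
  then have "summable (\<lambda>n. sqrt (phi n))" by (intro summable_comparison_test_ev[OF _ s2])
  then show "summable (\<lambda>k. sqrt (phi (Suc k)))" using summable_Suc_iff[of "\<lambda>n. sqrt (phi n)"] by simp
qed


lemma qfacts: assumes "1 \<le> n" shows "1 \<le> real n powr (1/4)" "(real n powr (1/4))^2 = real n powr (1/2)"
  "(real n powr (1/4))^3 = real n powr (3/4)" "(real n powr (1/4))^4 = real n"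
  "real n powr (-1/2) = 1 / (real n powr (1/4))^2" "real n powr (-3/4) = 1 / (real n powr (1/4))^3"
proof -
  have n0: "real n \<noteq> 0" using assms by simp
  show "1 \<le> real n powr (1/4)" using assms by (intro ge_one_powr_ge_zero) auto
  show q2: "(real n powr (1/4))^2 = real n powr (1/2)" using n0 by (simp add: powr_power)
  show q3: "(real n powr (1/4))^3 = real n powr (3/4)" using n0 by (simp add: powr_power)
  show "(real n powr (1/4))^4 = real n" using n0 assms by (simp add: powr_power)
  show "real n powr (-1/2) = 1 / (real n powr (1/4))^2" unfolding q2 by (simp add: powr_minus_divide)
  show "real n powr (-3/4) = 1 / (real n powr (1/4))^3" unfolding q3 by (simp add: powr_minus_divide)
qed

lemma bound_n:
  fixes n m :: nat and a \<nu> c C d C0 phim q L :: real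
  assumes n3: "3 \<le> n" and q: "q = real n powr (1/4)" and m: "m = nat \<lceil>q\<rceil>"
    and a: "a \<le> 2 * C0 * L / q^2"
    and nu: "0 \<le> \<nu>" "\<nu> \<le> d * a"
    and pos: "0 \<le> d" "0 \<le> C" "0 < C0" "0 \<le> c" "0 \<le> L"
    and phim: "0 \<le> phim" "phim \<le> c / q^3"
    and E4: "4 * d * C * C0 * L \<le> ln n"
  shows "4 * exp (- (8 * q * ln n) / m + (real n / real m + 1) * (\<nu> * C / m + exp 1 * phim)) \<le> 4 * exp (2 * exp 1 * c) / real n ^ 3"
proof -
  have n1: "1 \<le> n" using n3 by simp
  note qf = qfacts[OF n1, folded q]
  have q1: "1 \<le> q" using qf(1) .
  have q0: "0 < q" using q1 by simp
  have mq: "q \<le> real m" "real m \<le> q + 1" unfolding m using q0 by (auto simp: of_nat_nat)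
  have m0: "0 < real m" using mq q0 by linarith
  have m2q: "real m \<le> 2 * q" using mq q1 by linarith
  have lnn: "0 \<le> ln (real n)" using n1 by simp
  have i: "4 * ln n \<le> (8 * q * ln n) / m"
  proof -
    have "4 * ln n * real m \<le> 4 * ln n * (2 * q)" using m2q lnn by (intro mult_left_mono) auto
    then show ?thesis using m0 by (simp add: pos_le_divide_eq algebra_simps)
  qed
  have q3pos: "0 < q^3" using q0 by simp
  have n_eq: "real n = q^4" using qf(4) by simp
  have ii: "real n / real m + 1 \<le> 2 * q^3"
  proof -
    have "real n / real m \<le> real n / q" using mq(1) q0 by (intro divide_left_mono) auto
    also have "\<dots> = q^3" unfolding n_eq using q0 by (simp add: power_def)
    finally have "real n / real m \<le> q^3" .
    moreover have "1 \<le> q^3" using q1 by simp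
    ultimately show ?thesis by linarith
  qed
  have iii: "\<nu> * C / m \<le> 2 * d * C * C0 * L / q^3"
  proof -
    have "\<nu> * C / m \<le> (d * a) * C / q"
      using nu pos mq(1) q0 m0 by (intro frac_le mult_right_mono) auto
    also have "\<dots> \<le> (d * (2 * C0 * L / q^2)) * C / q"
      using a pos q0 by (intro divide_right_mono mult_right_mono mult_left_mono) auto
    also have "\<dots> = 2 * d * C * C0 * L / q^3" using q0 by (simp add: power_def field_simps)
    finally show ?thesis .
  qed
  have iv: "exp 1 * phim \<le> exp 1 * c / q^3" using phim by (simp add: mult_left_mono times_divide_eq_right[symmetric] del: times_divide_eq_right)
  have sum0: "0 \<le> \<nu> * C / m + exp 1 * phim" using nu pos phim m0 by simp
  have "(real n / real m + 1) * (\<nu> * C / m + exp 1 * phim) \<le> 2 * q^3 * (2 * d * C * C0 * L / q^3 + exp 1 * c / q^3)"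
    using ii iii iv sum0 q0 by (intro mult_mono) auto
  also have "\<dots> = 4 * d * C * C0 * L + 2 * exp 1 * c" using q3pos by (simp add: field_simps)
  finally have v: "(real n / real m + 1) * (\<nu> * C / m + exp 1 * phim) \<le> ln n + 2 * exp 1 * c" using E4 by linarith
  have "- (8 * q * ln n) / m + (real n / real m + 1) * (\<nu> * C / m + exp 1 * phim) \<le> 2 * exp 1 * c - 3 * ln n"
    using i v by simp
  then have "exp (- (8 * q * ln n) / m + (real n / real m + 1) * (\<nu> * C / m + exp 1 * phim)) \<le> exp (2 * exp 1 * c - 3 * ln n)"
    by simp
  also have "\<dots> = exp (2 * exp 1 * c) / real n ^ 3" using n1
  proof -
    have "exp (3 * ln (real n)) = real n ^ 3" using exp_of_nat_mult[of 3 "ln (real n)"] n1 by simp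
    then show ?thesis by (simp add: exp_diff)
  qed
  finally show ?thesis by simp
qed

lemma ev6_lemma:
  fixes phi :: "nat \<Rightarrow> real"
  assumes c: "c > 0" "eventually (\<lambda>n. phi n \<le> c * real n powr (-3)) sequentially"
  shows "eventually (\<lambda>n. phi (nat \<lceil>real n powr (1/4)\<rceil> + 1) \<le> c / (real n powr (1/4))^3) sequentially"
  proof -
    obtain K0 where K0: "\<And>k. k \<ge> K0 \<Longrightarrow> phi k \<le> c * real k powr (-3)" using c(2) unfolding eventually_sequentially by blast
    have "eventually (\<lambda>n. n \<ge> K0^4 + 1) sequentially" by (rule eventually_ge_at_top)
    then show ?thesis
    proof eventually_elim
      case (elim n)
      define q where "q = real n powr (1/4)"
      define m where "m = nat \<lceil>q\<rceil>"
      have n1: "1 \<le> n" using elim by simp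
      note qf = qfacts[OF n1, folded q_def]
      have q0: "0 < q" using qf(1) by simp
      have "real (K0^4) \<le> real n" using elim by linarith
      then have "real K0 ^ 4 \<le> q ^ 4" using qf(4) by simp
      then have "real K0 \<le> q" using power_mono_iff[of "real K0" q 4] q0 by simp
      moreover have "q \<le> real m" unfolding m_def using q0 by (simp add: of_nat_nat)
      ultimately have mK: "K0 \<le> m + 1" and qm: "q \<le> real (m + 1)" by linarith+
      have "phi (m + 1) \<le> c * real (m + 1) powr (-3)" by (rule K0[OF mK])
      also have "real (m + 1) powr (-3) = 1 / real (m + 1) ^ 3"
        by (simp add: powr_minus_divide)
      also have "c * (1 / real (m + 1) ^ 3) \<le> c * (1 / q ^ 3)"
        using qm q0 c(1) by (intro mult_left_mono divide_left_mono power_mono) auto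
      finally show ?case unfolding m_def q_def by simp
    qed
  qed


lemma nu_eq:
  fixes X :: "nat \<Rightarrow> 'a \<Rightarrow> real"
  assumes P: "prob_space M" and Xm: "X i \<in> borel_measurable M"
    and marg: "\<And>x. measure M {\<omega> \<in> space M. X i \<omega> \<le> x} = F x" and lh: "lo \<le> hi"
  shows "measure M {\<omega>\<in>space M. lo < X i \<omega> \<and> X i \<omega> \<le> hi} = F hi - F lo"
proof -
  interpret prob_space M by (rule P)
  have e: "{\<omega>\<in>space M. lo < X i \<omega> \<and> X i \<omega> \<le> hi} = {\<omega> \<in> space M. X i \<omega> \<le> hi} - {\<omega> \<in> space M. X i \<omega> \<le> lo}"
    by auto
  have s1: "{\<omega> \<in> space M. X i \<omega> \<le> hi} \<in> sets M" "{\<omega> \<in> space M. X i \<omega> \<le> lo} \<in> sets M" using Xm by measurable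
  have "{\<omega> \<in> space M. X i \<omega> \<le> lo} \<subseteq> {\<omega> \<in> space M. X i \<omega> \<le> hi}" using lh by auto
  then show ?thesis unfolding e using s1 marg by (simp add: finite_measure_Diff)
qed

theorem theorem2p1:
  fixes M :: "'a measure" and X :: "nat \<Rightarrow> 'a \<Rightarrow> real"
    and F f :: "real \<Rightarrow> real" and p C0 :: real and a :: "nat \<Rightarrow> real"
    and N :: "real set"
  assumes "prob_space M"
    and rv: "\<And>i. i \<ge> 1 \<Longrightarrow> X i \<in> borel_measurable M"
    and marg: "\<And>i x. i \<ge> 1 \<Longrightarrow> measure M {\<omega> \<in> space M. X i \<omega> \<le> x} = F x"
    and mixing: "decseq (phi_mix M X)" "phi_mix M X \<longlonglongrightarrow> 0"
    and rate: "phi_mix M X \<in> O(\<lambda>n. real n powr (-3))"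
    and p: "0 < p" "p < 1"
    and N: "open N" "Inf {x. F x \<ge> p} \<in> N"
    and dens: "\<And>x. x \<in> N \<Longrightarrow> (F has_real_derivative f x) (at x)"
    and fcont: "continuous_on N f" and fpos: "\<And>x. x \<in> N \<Longrightarrow> f x > 0"
    and fbdd: "bdd_above (f ` N)"
    and C0: "C0 > 0"
    and an: "a \<sim>[at_top] (\<lambda>n. C0 * real n powr (-1/2) * ln (real n) powr (3/4))"
  shows "AE \<omega> in M. eventually (\<lambda>n.
      (SUP x\<in>{Inf {x. F x \<ge> p} - a n .. Inf {x. F x \<ge> p} + a n}.
         \<bar>(emp_df X n \<omega> x - F x) - (emp_df X n \<omega> (Inf {x. F x \<ge> p}) - p)\<bar>)
      \<le> (Sup (f ` N) + 4 * (4 * (1 + 4 * (\<Sum>k. sqrt (phi_mix M X (Suc k))))))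
         * real n powr (-3/4) * ln (real n)) sequentially"
proof -
  interpret P: prob_space M by fact
  interpret MS: mixseq M X by (intro mixseq.intro mixseq_axioms.intro \<open>prob_space M\<close> rv)
  define xi where "xi = Inf {x. F x \<ge> p}"
  define phi where "phi = phi_mix M X"
  define d where "d = Sup (f ` N)"
  have phi0: "\<And>n. 0 \<le> phi n" unfolding phi_def by (rule MS.phi_mix_props(1))
  obtain c where c: "c > 0" "eventually (\<lambda>n. phi n \<le> c * real n powr (-3)) sequentially"
    using phi_sum(1)[OF rate[folded phi_def] phi0] by blast
  have sm: "summable (\<lambda>k. phi (Suc k))" and smq: "summable (\<lambda>k. sqrt (phi (Suc k)))"
    using phi_sum(2,3)[OF rate[folded phi_def] phi0] by auto
  define Sp where "Sp = (\<Sum>k. phi (Suc k))"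
  define C where "C = 1 + 2 * Sp"
  define C3 where "C3 = 4 * (1 + 4 * (\<Sum>k. sqrt (phi (Suc k))))"
  have C_0: "0 \<le> C" unfolding C_def Sp_def using suminf_nonneg[OF sm] phi0 by auto
  have C3_4: "4 \<le> C3" unfolding C3_def using suminf_nonneg[OF smq] phi0 by auto
  have monoF: "mono F" using F_basic(1)[OF \<open>prob_space M\<close> rv[of 1] marg[of 1]] by simp
  have Flo: "\<exists>x. F x < p" using F_basic(2)[OF \<open>prob_space M\<close> rv[of 1] marg[of 1] p(1)] by simp
  have Fhi: "\<exists>x. p \<le> F x" using F_basic(3)[OF \<open>prob_space M\<close> rv[of 1] marg[of 1] p(2)] by simp
  have xiN: "xi \<in> N" using N(2) unfolding xi_def .
  have Fxi: "F xi = p"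
    unfolding xi_def using xi_prop[OF monoF Flo Fhi] DERIV_isCont[OF dens[OF xiN]] unfolding xi_def by simp
  obtain eps where eps: "eps > 0" "cball xi eps \<subseteq> N" using open_contains_cball N(1) xiN by blast
  have fd: "\<And>x. x \<in> N \<Longrightarrow> f x \<le> d" unfolding d_def using fbdd by (intro cSup_upper) auto
  have d0: "0 < d" using fd[OF xiN] fpos[OF xiN] by linarith
  have lipF: "F y - F x \<le> d * (y - x)" if "xi - eps \<le> x" "x \<le> y" "y \<le> xi + eps" for x y
  proof (rule lip[where lo="xi - eps" and hi="xi + eps" and f=f])
    fix z assume "z \<in> {xi - eps..xi + eps}"
    then have "z \<in> N" using eps(2) by (auto simp: cball_def dist_real_def)
    then show "(F has_real_derivative f z) (at z)" "f z \<le> d" using dens fd by auto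
  qed (use that in auto)
  define q where "q n = real n powr (1/4)" for n :: nat
  define L where "L n = ln (real n) powr (3/4)" for n :: nat
  define m where "m n = nat \<lceil>q n\<rceil>" for n
  define \<delta> where "\<delta> n = real n powr (-3/4)" for n :: nat
  define J where "J n = nat \<lceil>2 * a n / \<delta> n\<rceil>" for n
  define y where "y n j = min (xi - a n + real j * \<delta> n) (xi + a n)" for n j
  define lo where "lo n j = min (y n j) xi" for n j
  define hi where "hi n j = max (y n j) xi" for n j
  define nu where "nu n j = F (hi n j) - F (lo n j)" for n j
  define Ev where "Ev n = (\<Union>j\<in>{..J n + 1}. {\<omega>\<in>space M. 2 * (8 * q n * ln (real n)) \<le> \<bar>Dev X (lo n j) (hi n j) (nu n j) n \<omega>\<bar>})" for n
  define g where "g n = C0 * real n powr (-1/2) * ln (real n) powr (3/4)" for n :: nat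
  have ev_g: "eventually (\<lambda>n. 0 < g n) sequentially" unfolding g_def using C0 by real_asymp
  have ev_a: "eventually (\<lambda>n. 0 < a n \<and> a n \<le> 2 * g n) sequentially"
  proof -
    have "eventually (\<lambda>x. a x \<noteq> 0 \<or> g x \<noteq> 0) sequentially" using ev_g by (auto elim!: eventually_mono)
    then have "((\<lambda>n. a n / g n) \<longlongrightarrow> 1) sequentially"
      by (rule asymp_equivD_strong[OF an[folded g_def]])
    then have "eventually (\<lambda>n. 1/2 < a n / g n \<and> a n / g n < 2) sequentially"
      by (intro eventually_conj order_tendstoD) auto
    then show ?thesis using ev_g
    proof eventually_elim
      case (elim n)
      then show ?case by (auto simp: field_simps)
    qed
  qed
  have ev_ge: "eventually (\<lambda>n. 2 * g n \<le> eps) sequentially"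
  proof -
    have "(g \<longlongrightarrow> 0) sequentially" unfolding g_def by real_asymp
    then have "eventually (\<lambda>n. g n < eps / 2) sequentially" using eps(1) by (intro order_tendstoD) auto
    then show ?thesis by (auto elim!: eventually_mono)
  qed
  have ev4: "eventually (\<lambda>n. 4 * d * C * C0 * L n \<le> ln (real n)) sequentially"
    unfolding L_def by real_asymp
  have ev5: "eventually (\<lambda>n. 4 * C0 * q n * L n + 3 \<le> real n) sequentially"
    unfolding L_def q_def by real_asymp
  have ev6: "eventually (\<lambda>n. phi (m n + 1) \<le> c / (q n)^3) sequentially"
    using ev6_lemma[OF c] unfolding m_def q_def .
  have DevM[measurable]: "\<And>lo hi nu n. Dev X lo hi nu n \<in> borel_measurable M" using Dev_M rv by blast
  have Evm: "Ev n \<in> sets M" for n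
    unfolding Ev_def by (intro sets.finite_UN) auto
  define K where "K = 4 * exp (2 * exp 1 * c)"
  have ev_all: "eventually (\<lambda>n. 3 \<le> n \<and> (0 < a n \<and> a n \<le> 2 * g n) \<and> 2 * g n \<le> eps \<and>
      4 * d * C * C0 * L n \<le> ln (real n) \<and> 4 * C0 * q n * L n + 3 \<le> real n \<and> phi (m n + 1) \<le> c / (q n)^3) sequentially"
    by (intro eventually_conj ev_a ev_ge ev4 ev5 ev6 eventually_ge_at_top)
  have grid: "xi - a n \<le> y n j \<and> y n j \<le> xi + a n" if "0 < a n" "1 \<le> n" for n j
  proof -
    have "0 \<le> \<delta> n" unfolding \<delta>_def by simp
    then have "0 \<le> real j * \<delta> n" by simp
    then show ?thesis unfolding y_def using that by auto
  qed
  have Pb: "eventually (\<lambda>n. measure M (Ev n) \<le> K / real n ^ 2) sequentially"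
    using ev_all
  proof eventually_elim
    case (elim n)
    have n1: "1 \<le> n" using elim by simp
    note qf = qfacts[OF n1, folded q_def]
    have q0: "0 < q n" using qf(1) by simp
    have an0: "0 < a n" using elim by simp
    have g_eq: "g n = C0 * L n / (q n)^2" unfolding g_def L_def qf(5) by simp
    have a_le: "a n \<le> 2 * C0 * L n / (q n)^2" using elim g_eq by simp
    have m1: "1 \<le> m n" unfolding m_def using qf(1) by linarith
    have L0: "0 \<le> L n" unfolding L_def by simp
    have each: "measure M {\<omega>\<in>space M. 2 * (8 * q n * ln (real n)) \<le> \<bar>Dev X (lo n j) (hi n j) (nu n j) n \<omega>\<bar>}
        \<le> K / real n ^ 3" for j
    proof -
      have gr: "xi - a n \<le> y n j" "y n j \<le> xi + a n" using grid[OF an0 n1] by auto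
      have lh: "lo n j \<le> hi n j" unfolding lo_def hi_def by simp
      have nueq: "measure M {\<omega>\<in>space M. lo n j < X i \<omega> \<and> X i \<omega> \<le> hi n j} = nu n j" if "1 \<le> i" for i
        unfolding nu_def by (rule nu_eq[where X=X and i=i, OF \<open>prob_space M\<close> rv[OF that] marg[OF that] lh])
      have nu0: "0 \<le> nu n j" unfolding nu_def using monoF lh by (simp add: mono_def)
      have "nu n j \<le> d * (hi n j - lo n j)" unfolding nu_def
        using gr elim an0 lh by (intro lipF) (auto simp: lo_def hi_def)
      also have "\<dots> \<le> d * a n" using gr d0 by (intro mult_left_mono) (auto simp: lo_def hi_def)
      finally have nua: "nu n j \<le> d * a n" .
      have "measure M {\<omega>\<in>space M. 2 * (8 * q n * ln (real n)) \<le> \<bar>Dev X (lo n j) (hi n j) (nu n j) n \<omega>\<bar>}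
        \<le> 4 * exp (- (8 * q n * ln (real n)) / m n + (real n / real (m n) + 1) * (nu n j * (1 + 2 * (\<Sum>k. phi_mix M X (Suc k))) / m n + exp 1 * phi_mix M X (m n + 1)))"
        by (rule tail_global[OF \<open>prob_space M\<close> rv nueq sm[unfolded phi_def] m1])
      also have "\<dots> = 4 * exp (- (8 * q n * ln (real n)) / m n + (real n / real (m n) + 1) * (nu n j * C / m n + exp 1 * phi (m n + 1)))"
        unfolding C_def Sp_def phi_def ..
      also have "\<dots> \<le> K / real n ^ 3" unfolding K_def
        by (rule bound_n[where C=C and C0=C0 and L="L n" and d=d and a="a n" and \<nu>="nu n j" and phim="phi (m n + 1)" and c=c])
          (use elim a_le nu0 nua C_0 C0 L0 phi0 d0 c(1) in \<open>auto simp: q_def m_def\<close>)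
      finally show ?thesis .
    qed
    have "measure M (Ev n) \<le> (\<Sum>j\<in>{..J n + 1}. measure M {\<omega>\<in>space M. 2 * (8 * q n * ln (real n)) \<le> \<bar>Dev X (lo n j) (hi n j) (nu n j) n \<omega>\<bar>})"
      unfolding Ev_def by (intro measure_UNION_le) auto
    also have "\<dots> \<le> (\<Sum>j\<in>{..J n + 1}. K / real n ^ 3)" by (intro sum_mono each)
    also have "\<dots> = real (J n + 2) * (K / real n ^ 3)" by simp
    also have "\<dots> \<le> real n * (K / real n ^ 3)"
    proof (intro mult_right_mono)
      have "2 * a n / \<delta> n = 2 * a n * (q n)^3" unfolding \<delta>_def qf(6) by simp
      also have "\<dots> \<le> 2 * (2 * C0 * L n / (q n)^2) * (q n)^3" using a_le q0 by (intro mult_right_mono mult_left_mono) auto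
      also have "\<dots> = 4 * C0 * q n * L n" using q0 by (simp add: power_def field_simps)
      finally have "2 * a n / \<delta> n \<le> 4 * C0 * q n * L n" .
      moreover have "0 \<le> 2 * a n / \<delta> n" using an0 unfolding \<delta>_def by simp
      ultimately have "real (J n) \<le> 4 * C0 * q n * L n + 1" unfolding J_def by (simp add: of_nat_nat) linarith
      then show "real (J n + 2) \<le> real n" using elim by simp
    qed (simp add: K_def)
    also have "\<dots> = K / real n ^ 2" using n1 by (simp add: power_def field_simps)
    finally show ?case .
  qed
  have summ: "summable (\<lambda>n. measure M (Ev n))"
  proof (rule summable_comparison_test_ev)
    show "summable (\<lambda>n. K * real n powr (-2))" by (intro summable_mult) (simp add: summable_real_powr_iff)
    show "eventually (\<lambda>n. norm (measure M (Ev n)) \<le> K * real n powr (-2)) sequentially"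
      using Pb by eventually_elim (simp add: powr_minus_divide)
  qed
  have BC: "AE \<omega> in M. eventually (\<lambda>n. \<omega> \<in> space M - Ev n) sequentially"
    by (rule borel_cantelli_AE1[OF Evm]) (auto simp: summ P.emeasure_finite less_top[symmetric])
  define G where "G n \<omega> x = (emp_df X n \<omega> x - F x) - (emp_df X n \<omega> xi - p)" for n \<omega> x
  have final: "eventually (\<lambda>n. (SUP x\<in>{xi - a n .. xi + a n}. \<bar>G n \<omega> x\<bar>) \<le> (d + 4 * C3) * real n powr (-3/4) * ln (real n)) sequentially"
    if "eventually (\<lambda>n. \<omega> \<in> space M - Ev n) sequentially" for \<omega>
    using that ev_all
  proof eventually_elim
    case (elim n)
    have n1: "1 \<le> n" using elim by simp
    note qf = qfacts[OF n1, folded q_def]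
    have q0: "0 < q n" using qf(1) by simp
    have an0: "0 < a n" using elim by simp
    have \<delta>0: "0 < \<delta> n" unfolding \<delta>_def using n1 by simp
    have \<delta>q: "\<delta> n = 1 / (q n)^3" unfolding \<delta>_def qf(6) ..
    have lnn: "1 \<le> ln (real n)"
    proof -
      have "exp 1 \<le> real n" using elim exp_le by linarith
      then show ?thesis using n1 by (simp add: ln_ge_iff)
    qed
    have good: "\<bar>Dev X (lo n j) (hi n j) (nu n j) n \<omega>\<bar> < 2 * (8 * q n * ln (real n))" if "j \<le> J n + 1" for j
    proof -
      have "j \<in> {..J n + 1}" using that by simp
      then have "\<not> (2 * (8 * q n * ln (real n)) \<le> \<bar>Dev X (lo n j) (hi n j) (nu n j) n \<omega>\<bar>)"
        using elim(1) unfolding Ev_def by blast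
      then show ?thesis by linarith
    qed
    have Gy: "\<bar>G n \<omega> (y n j)\<bar> \<le> 16 * ln (real n) / (q n)^3" if "j \<le> J n + 1" for j
    proof -
      have "real n * \<bar>G n \<omega> (y n j)\<bar> = \<bar>Dev X (lo n j) (hi n j) (nu n j) n \<omega>\<bar>"
        unfolding G_def lo_def hi_def nu_def by (rule G_identity[where X=X and F=F and xi=xi and p=p and n=n and \<omega>=\<omega> and y="y n j", OF n1 Fxi])
      also have "\<dots> \<le> 16 * q n * ln (real n)" using good[OF that] by simp
      finally have "(q n)^4 * \<bar>G n \<omega> (y n j)\<bar> \<le> 16 * q n * ln (real n)" unfolding qf(4) .
      then show ?thesis using q0 by (simp add: pos_le_divide_eq power_def field_simps)
    qed
    have bnd: "\<bar>G n \<omega> x\<bar> \<le> (d + 4 * C3) * real n powr (-3/4) * ln (real n)" if x: "x \<in> {xi - a n .. xi + a n}" for x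
    proof -
      define t where "t = (x - (xi - a n)) / \<delta> n"
      define j where "j = nat \<lfloor>t\<rfloor>"
      have t0: "0 \<le> t" unfolding t_def using x \<delta>0 by simp
      have jt: "real j \<le> t" "t < real j + 1" unfolding j_def using t0 by (auto simp: of_nat_nat)
      have t2: "t \<le> 2 * a n / \<delta> n" unfolding t_def using x \<delta>0 by (intro divide_right_mono) auto
      have jJ: "j \<le> J n"
      proof -
        have "real j \<le> real (J n)" unfolding J_def using jt(1) t2 by (simp add: of_nat_nat) linarith
        then show ?thesis by simp
      qed
      have lowx: "xi - a n + real j * \<delta> n \<le> x" using jt(1) \<delta>0 unfolding t_def by (simp add: pos_le_divide_eq algebra_simps)
      have upx: "x \<le> xi - a n + real (j + 1) * \<delta> n" using jt(2) \<delta>0 unfolding t_def by (simp add: pos_divide_less_eq algebra_simps)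
      have yx: "y n j \<le> x" unfolding y_def using lowx by simp
      have xz: "x \<le> y n (j + 1)" unfolding y_def using upx x by simp
      have zy: "y n (j + 1) - y n j \<le> \<delta> n" unfolding y_def using \<delta>0 by (auto simp: min_def algebra_simps)
      have gj: "xi - a n \<le> y n j" "y n (j+1) \<le> xi + a n" using grid[OF an0 n1] by auto
      have Fd: "F (y n (j + 1)) - F (y n j) \<le> d * \<delta> n"
      proof -
        have "F (y n (j + 1)) - F (y n j) \<le> d * (y n (j + 1) - y n j)"
          using gj yx xz elim an0 by (intro lipF) auto
        also have "\<dots> \<le> d * \<delta> n" using zy d0 by (intro mult_left_mono) auto
        finally show ?thesis .
      qed
      have "\<bar>G n \<omega> x\<bar> \<le> 16 * ln (real n) / (q n)^3 + d * \<delta> n"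
        unfolding G_def
      proof (rule interp[where Fn="emp_df X n \<omega>" and F=F])
        show "mono (emp_df X n \<omega>)" by (rule monoI) (rule emp_df_mono)
        show "\<bar>emp_df X n \<omega> (y n j) - F (y n j) - (emp_df X n \<omega> xi - p)\<bar> \<le> 16 * ln (real n) / q n ^ 3"
          using Gy[of j] jJ unfolding G_def by simp
        show "\<bar>emp_df X n \<omega> (y n (j + 1)) - F (y n (j + 1)) - (emp_df X n \<omega> xi - p)\<bar> \<le> 16 * ln (real n) / q n ^ 3"
          using Gy[of "j + 1"] jJ unfolding G_def by simp
      qed (use monoF yx xz Fd in auto)
      also have "\<dots> = (16 * ln (real n) + d) * real n powr (-3/4)" unfolding \<delta>q qf(6) by (simp add: field_simps add_divide_distrib)
      also have "\<dots> \<le> ((d + 4 * C3) * ln (real n)) * real n powr (-3/4)"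
      proof (intro mult_right_mono)
        have "16 * ln (real n) \<le> 4 * C3 * ln (real n)" using C3_4 lnn by (intro mult_right_mono) auto
        moreover have "d \<le> d * ln (real n)" using d0 lnn by simp
        ultimately show "16 * ln (real n) + d \<le> (d + 4 * C3) * ln (real n)" by (simp add: algebra_simps)
      qed simp
      finally show ?thesis by (simp add: algebra_simps)
    qed
    show ?case
      by (rule cSUP_least) (use an0 bnd in auto)
  qed
  have "AE \<omega> in M. eventually (\<lambda>n. (SUP x\<in>{xi - a n .. xi + a n}. \<bar>G n \<omega> x\<bar>) \<le> (d + 4 * C3) * real n powr (-3/4) * ln (real n)) sequentially"
    using BC by (rule eventually_mono) (rule final)
  then show ?thesis unfolding G_def xi_def d_def C3_def phi_def .
qed

end
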